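(* Let $\pi\colon E\to M$ be endowed with a symmetric $n$-fold vector bundle atlas $\{(U_\alpha,\Theta_\alpha,(V^{\#I})_{\emptyset\ne I\subseteq\underline n})\}_{\alpha\in\Lambda}$. For $\sigma\in S_n$ and $\alpha\in\Lambda$ define $\Phi^\alpha_\sigma\colon U_\alpha\times\prod_{\emptyset\neq I\subseteq\underline n}V^{\#I}\to U_\alpha\times\prod_{\emptyset\neq I\subseteq\underline n}V^{\#I}$ by $\Phi^\alpha_\sigma(p,(v_I)_I)=(p,(\epsilon(\sigma^{-1},I)v_{\sigma^{-1}(I)})_I)$. Then the maps $\Theta_\alpha^{-1}\circ\Phi^\alpha_\sigma\circ\Theta_\alpha$ agree on overlaps and define a global map $\Phi_\sigma\colon E\to E$, and $\sigma\mapsto\Phi_\sigma$ is a left action of $S_n$ on $E$.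
   Context: $\epsilon(\sigma,I)=(-1)^{\#\{(a,b)\in I^2:a<b,\sigma(a)>\sigma(b)\}}$. An $n$-fold vector bundle chart on a topological space $E$ with continuous $\pi\colon E\to M$ ($M$ a smooth manifold) is $(U,\Theta,(V_I)_{\emptyset\ne I\subseteq\underline n})$ with $U\subseteq M$ open, $V_I$ finite-dimensional real vector spaces, and $\Theta\colon\pi^{-1}(U)\to U\times\prod_I V_I$ a homeomorphism with $\pi=\mathrm{pr}_1\circ\Theta$. Two charts are smoothly compatible if $\Theta'\circ\Theta^{-1}$ has the form $(p,(v_I)_I)\mapsto(p,(\sum_{\rho=(I_1,\ldots,I_k)\in\mathcal P(I)}\omega_\rho(p)(v_{I_1},\ldots,v_{I_k}))_I)$ with $\omega_\rho\in C^\infty(U\cap U',\mathrm{Hom}(V_{I_1}\otimes\cdots\otimes V_{I_k},V_I))$; an atlas is a family of pairwise compatible charts covering $M$. $\mathcal P(I)$: partitions of $I$ in canonical order (increasing cardinality, ties lexicographic). The atlas is symmetric if (1) $V_I=V^{\#I}$ depends only on $\#I$; (2) for all $\alpha,\beta$ and partitions $\rho_1\in\mathcal P(I)$, $\rho_2\in\mathcal P(J)$ with $\#I=\#J$ and equal sizes $(\#$blocks in order$)$, $\mathrm{sgn}(\rho_1)\omega^{\rho_1}_{\alpha\beta}=\mathrm{sgn}(\rho_2)\omega^{\rho_2}_{\alpha\beta}$ (so the change of chart is $(p,(v_I))\mapsto(p,(\sum_{\rho\in\mathcal P(I)}\mathrm{sgn}(\rho)\,\omega^{\#I_1,\ldots,\#I_k}_{\alpha\beta}(p)(v_{I_1},\ldots,v_{I_k}))_I)$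 with $\omega^{l_1,\ldots,l_k}_{\alpha\beta}$ the common value for the canonical partition); (3) each $\omega^{l_1,\ldots,l_k}_{\alpha\beta}(p)$ is symmetric in arguments from $V^j$ for $j$ even and alternating for $j$ odd. Here $\mathrm{sgn}(\rho)$ for an ordered partition $(I_1,\ldots,I_k)$ of $I$ is the sign of the permutation of $I$ from its natural order to the order obtained by listing $I_1$ increasingly, then $I_2$, etc. *)

theory Defs
  imports "HOL-Analysis.Analysis" "HOL-Combinatorics.Permutations"
begin

definition Idx :: "nat \<Rightarrow> nat set set" where
  "Idx n = {I. I \<noteq> {} \<and> I \<subseteq> {1..n}}"

definition perm_eps :: "(nat \<Rightarrow> nat) \<Rightarrow> nat set \<Rightarrow> real" where
  "perm_eps \<sigma> I = (-1) ^ card {(a, b). a \<in> I \<and> b \<in> I \<and> a < b \<and> \<sigma> a > \<sigma> b}"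

definition inv_count :: "nat list \<Rightarrow> nat" where
  "inv_count xs = card {(i, j). i < j \<and> j < length xs \<and> xs ! j < xs ! i}"

text \<open>sgn of an ordered partition: sign of the permutation from the natural order of I
  to the order obtained by listing the blocks increasingly one after another.\<close>
definition part_sgn :: "nat set list \<Rightarrow> real" where
  "part_sgn \<rho> = (-1) ^ inv_count (concat (map sorted_list_of_set \<rho>))"

definition block_less :: "nat set \<Rightarrow> nat set \<Rightarrow> bool" where
  "block_less A B \<longleftrightarrow> card A < card B \<or>
     (card A = card B \<and> (sorted_list_of_set A, sorted_list_of_set B) \<in> lexord {(x, y). x < y})"

definition canon_partitions :: "nat set \<Rightarrow> nat set list set" where
  "canon_partitions I = {\<rho>. (\<forall>B\<in>set \<rho>. B \<noteq> {}) \<and> \<Union>(set \<rho>) = I \<and>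
      (\<forall>i<length \<rho>. \<forall>j<length \<rho>. i \<noteq> j \<longrightarrow> \<rho> ! i \<inter> \<rho> ! j = {}) \<and>
      sorted_wrt block_less \<rho>}"

definition multilinear_into :: "'v::real_vector set list \<Rightarrow> 'v set \<Rightarrow> ('v list \<Rightarrow> 'v) \<Rightarrow> bool" where
  "multilinear_into Vs W f \<longleftrightarrow>
     (\<forall>xs. length xs = length Vs \<and> (\<forall>j<length Vs. xs ! j \<in> Vs ! j) \<longrightarrow>
        f xs \<in> W \<and>
        (\<forall>i<length Vs. \<forall>x\<in>Vs ! i. \<forall>y\<in>Vs ! i. \<forall>a b.
           f (xs[i := a *\<^sub>R x + b *\<^sub>R y]) = a *\<^sub>R f (xs[i := x]) + b *\<^sub>R f (xs[i := y])))"

text \<open>Symmetric in arguments from V^j for j even, alternating for j odd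
  (ls = list of the sizes of the argument slots).\<close>
definition sym_alt :: "(nat \<Rightarrow> 'v::real_vector set) \<Rightarrow> nat list \<Rightarrow> ('v list \<Rightarrow> 'v) \<Rightarrow> bool" where
  "sym_alt V ls f \<longleftrightarrow>
     (\<forall>xs i j. length xs = length ls \<and> (\<forall>k<length ls. xs ! k \<in> V (ls ! k)) \<and>
        i < j \<and> j < length ls \<and> ls ! i = ls ! j \<longrightarrow>
        (if even (ls ! i) then f (xs[i := xs ! j, j := xs ! i]) = f xs
         else (xs ! i = xs ! j \<longrightarrow> f xs = 0)))"

definition chart_domain :: "'e topology \<Rightarrow> ('e \<Rightarrow> 'm) \<Rightarrow> 'm set \<Rightarrow> 'e set" where
  "chart_domain E \<pi> U = {e \<in> topspace E. \<pi> e \<in> U}"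

definition fiber_top :: "nat \<Rightarrow> (nat \<Rightarrow> 'v::real_normed_vector set) \<Rightarrow> (nat set \<Rightarrow> 'v) topology" where
  "fiber_top n V = product_topology (\<lambda>I. subtopology euclidean (V (card I))) (Idx n)"

definition nfold_chart ::
  "nat \<Rightarrow> 'm topology \<Rightarrow> 'e topology \<Rightarrow> ('e \<Rightarrow> 'm) \<Rightarrow> (nat \<Rightarrow> 'v::real_normed_vector set)
   \<Rightarrow> 'm set \<Rightarrow> ('e \<Rightarrow> 'm \<times> (nat set \<Rightarrow> 'v)) \<Rightarrow> bool" where
  "nfold_chart n M E \<pi> V U \<Theta> \<longleftrightarrow> openin M U \<and>
     homeomorphic_map (subtopology E (chart_domain E \<pi> U))
        (prod_topology (subtopology M U) (fiber_top n V)) \<Theta> \<and>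
     (\<forall>e\<in>chart_domain E \<pi> U. fst (\<Theta> e) = \<pi> e)"

text \<open>Coefficient family omega_rho (indexed by partitions rho) witnessing that the
  change of chart Theta' o Theta^{-1} has the required form, with smoothness rendered
  as continuity in p.\<close>
definition chart_transition ::
  "nat \<Rightarrow> 'm topology \<Rightarrow> 'e topology \<Rightarrow> ('e \<Rightarrow> 'm) \<Rightarrow> (nat \<Rightarrow> 'v::real_normed_vector set)
   \<Rightarrow> 'm set \<Rightarrow> ('e \<Rightarrow> 'm \<times> (nat set \<Rightarrow> 'v)) \<Rightarrow> 'm set \<Rightarrow> ('e \<Rightarrow> 'm \<times> (nat set \<Rightarrow> 'v))
   \<Rightarrow> ('m \<Rightarrow> nat set list \<Rightarrow> 'v list \<Rightarrow> 'v) \<Rightarrow> bool" where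
  "chart_transition n M E \<pi> V U \<Theta> U' \<Theta>' \<omega> \<longleftrightarrow>
     (\<forall>I\<in>Idx n. \<forall>\<rho>\<in>canon_partitions I.
        (\<forall>p\<in>U \<inter> U'. multilinear_into (map (\<lambda>B. V (card B)) \<rho>) (V (card I)) (\<omega> p \<rho>)) \<and>
        (\<forall>args. continuous_map (subtopology M (U \<inter> U')) euclidean (\<lambda>p. \<omega> p \<rho> args))) \<and>
     (\<forall>e\<in>chart_domain E \<pi> (U \<inter> U').
        \<Theta>' e = (\<pi> e, \<lambda>I\<in>Idx n. \<Sum>\<rho>\<in>canon_partitions I. \<omega> (\<pi> e) \<rho> (map (snd (\<Theta> e)) \<rho>)))"

text \<open>Symmetric n-fold vector bundle atlas: V_I = V^{#I}; charts cover M; every change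
  of charts has the above form with coefficients satisfying conditions (2) and (3).\<close>
definition symmetric_nfold_atlas ::
  "nat \<Rightarrow> 'm topology \<Rightarrow> 'e topology \<Rightarrow> ('e \<Rightarrow> 'm) \<Rightarrow> (nat \<Rightarrow> 'v::euclidean_space set)
   \<Rightarrow> 'a set \<Rightarrow> ('a \<Rightarrow> 'm set) \<Rightarrow> ('a \<Rightarrow> 'e \<Rightarrow> 'm \<times> (nat set \<Rightarrow> 'v)) \<Rightarrow> bool" where
  "symmetric_nfold_atlas n M E \<pi> V \<Lambda> U \<Theta> \<longleftrightarrow>
     continuous_map E M \<pi> \<and>
     (\<forall>k. subspace (V k)) \<and>
     (\<forall>\<alpha>\<in>\<Lambda>. nfold_chart n M E \<pi> V (U \<alpha>) (\<Theta> \<alpha>)) \<and>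
     topspace M \<subseteq> (\<Union>\<alpha>\<in>\<Lambda>. U \<alpha>) \<and>
     (\<forall>\<alpha>\<in>\<Lambda>. \<forall>\<beta>\<in>\<Lambda>. \<exists>\<omega>.
        chart_transition n M E \<pi> V (U \<alpha>) (\<Theta> \<alpha>) (U \<beta>) (\<Theta> \<beta>) \<omega> \<and>
        (\<forall>I\<in>Idx n. \<forall>J\<in>Idx n. \<forall>\<rho>1\<in>canon_partitions I. \<forall>\<rho>2\<in>canon_partitions J.
           map card \<rho>1 = map card \<rho>2 \<longrightarrow>
           (\<forall>p\<in>U \<alpha> \<inter> U \<beta>. \<forall>args. part_sgn \<rho>1 *\<^sub>R \<omega> p \<rho>1 args = part_sgn \<rho>2 *\<^sub>R \<omega> p \<rho>2 args)) \<and>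
        (\<forall>I\<in>Idx n. \<forall>\<rho>\<in>canon_partitions I. \<forall>p\<in>U \<alpha> \<inter> U \<beta>.
           sym_alt V (map card \<rho>) (\<lambda>args. part_sgn \<rho> *\<^sub>R \<omega> p \<rho> args)))"

definition local_perm :: "nat \<Rightarrow> (nat \<Rightarrow> nat) \<Rightarrow> 'm \<times> (nat set \<Rightarrow> 'v::real_vector) \<Rightarrow> 'm \<times> (nat set \<Rightarrow> 'v)" where
  "local_perm n \<sigma> x = (fst x, \<lambda>I\<in>Idx n. perm_eps (inv \<sigma>) I *\<^sub>R snd x (inv \<sigma> ` I))"

end

theory Submission
  imports Defs
begin

fun ninv :: "nat list \<Rightarrow> nat" where
  "ninv [] = 0" | "ninv (x#xs) = length (filter (\<lambda>y. y < x) xs) + ninv xs"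

definition crs :: "nat list \<Rightarrow> nat list \<Rightarrow> nat" where
  "crs A B = sum_list (map (\<lambda>a. length (filter (\<lambda>b. b < a) B)) A)"

lemma ninv_append: "ninv (A @ B) = ninv A + ninv B + crs A B"
  by (induction A) (auto simp: crs_def)

lemma crs_append1: "crs (A @ A') B = crs A B + crs A' B"
  by (simp add: crs_def)

lemma crs_append2: "crs A (B @ B') = crs A B + crs A B'"
  by (simp add: crs_def sum_list_addf)

lemma crs_Cons1: "crs (a # A) B = length (filter (\<lambda>b. b < a) B) + crs A B"
  by (simp add: crs_def)

lemma len_filter_mset: "length (filter P B) = size (filter_mset P (mset B))"
  by (metis mset_filter size_mset)

lemma crs_mset: "crs A B = (\<Sum>a\<in>#mset A. size (filter_mset (\<lambda>b. b < a) (mset B)))"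
  by (induction A) (auto simp: crs_def len_filter_mset)

lemma crs_cong: "mset A = mset A' \<Longrightarrow> mset B = mset B' \<Longrightarrow> crs A B = crs A' B'"
  by (simp add: crs_mset)

lemma crs_swap: "set A \<inter> set B = {} \<Longrightarrow> crs A B + crs B A = length A * length B"
proof (induction A)
  case Nil then show ?case by (simp add: crs_def)
next
  case (Cons a A)
  have aB: "a \<notin> set B" using Cons.prems by auto
  have "crs B (a # A) = crs B [a] + crs B A" using crs_append2[of B "[a]" A] by simp
  moreover have "crs B [a] = length (filter (\<lambda>b. \<not> b < a) B)"
    unfolding crs_def
  proof -
    have "filter (\<lambda>b. \<not> b < a) B = filter (\<lambda>b. a < b) B"
    proof (rule filter_cong)
      fix x assume "x \<in> set B"
      then have "x \<noteq> a" using aB by auto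
      then show "(\<not> x < a) = (a < x)" by auto
    qed simp
    moreover have "sum_list (map (\<lambda>x. length (filter (\<lambda>b. b < x) [a])) B) = length (filter (\<lambda>b. a < b) B)"
      by (induction B) auto
    ultimately show "sum_list (map (\<lambda>x. length (filter (\<lambda>b. b < x) [a])) B) = length (filter (\<lambda>b. \<not> b < a) B)" by simp
  qed
  moreover have "length (filter (\<lambda>b. b < a) B) + length (filter (\<lambda>b. \<not> b < a) B) = length B"
    by (rule sum_length_filter_compl)
  moreover have "crs A B + crs B A = length A * length B" using Cons by auto
  moreover have "length (a # A) * length B = length B + length A * length B" by simp
  moreover have "crs (a # A) B = length (filter (\<lambda>b. b < a) B) + crs A B" by (rule crs_Cons1)
  ultimately show ?case by linarith
qed

lemma ninv_sorted: "sorted xs \<Longrightarrow> ninv xs = 0"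
  by (induction xs) (auto simp: filter_empty_conv)

definition ec :: "(nat \<Rightarrow> nat) \<Rightarrow> nat set \<Rightarrow> nat" where
  "ec g S = card {(a, b). a \<in> S \<and> b \<in> S \<and> a < b \<and> g a > g b}"

lemma perm_eps_ec: "perm_eps g I = (-1) ^ ec g I"
  by (simp add: perm_eps_def ec_def)

lemma ec_insert:
  assumes "finite S" "x \<notin> S"
  shows "ec g (insert x S) = ec g S + card {b\<in>S. x < b \<and> g b < g x} + card {a\<in>S. a < x \<and> g x < g a}"
proof -
  let ?P0 = "{(a, b). a \<in> S \<and> b \<in> S \<and> a < b \<and> g a > g b}"
  let ?B1 = "{b\<in>S. x < b \<and> g b < g x}"
  let ?B2 = "{a\<in>S. a < x \<and> g x < g a}"
  have eq: "{(a, b). a \<in> insert x S \<and> b \<in> insert x S \<and> a < b \<and> g a > g b}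
       = (?P0 \<union> Pair x ` ?B1) \<union> (\<lambda>a. (a, x)) ` ?B2" by auto
  have f0: "finite ?P0" by (rule finite_subset[of _ "S \<times> S"]) (use assms in auto)
  have c1: "card (Pair x ` ?B1) = card ?B1" by (rule card_image) (auto simp: inj_on_def)
  have c2: "card ((\<lambda>a. (a, x)) ` ?B2) = card ?B2" by (rule card_image) (auto simp: inj_on_def)
  have "card ((?P0 \<union> Pair x ` ?B1) \<union> (\<lambda>a. (a, x)) ` ?B2) = card (?P0 \<union> Pair x ` ?B1) + card ((\<lambda>a. (a, x)) ` ?B2)"
    by (rule card_Un_disjoint) (use assms f0 in auto)
  also have "card (?P0 \<union> Pair x ` ?B1) = card ?P0 + card (Pair x ` ?B1)"
    by (rule card_Un_disjoint) (use assms f0 in auto)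
  finally show ?thesis unfolding ec_def eq c1 c2 by simp
qed

lemma ec_parity:
  assumes "distinct L" "inj_on g (set L)"
  shows "even (ninv (map g L) + ninv L + ec g (set L))"
  using assms
proof (induction L)
  case Nil then show ?case by (simp add: ec_def)
next
  case (Cons x xs)
  let ?S = "set xs"
  have fin: "finite ?S" by simp
  have xS: "x \<notin> ?S" using Cons by simp
  have IH: "even (ninv (map g xs) + ninv xs + ec g ?S)" using Cons by simp
  have injx: "\<And>b. b \<in> ?S \<Longrightarrow> g b \<noteq> g x" using Cons.prems(2) xS by (auto simp: inj_on_def)
  have a1: "length (filter (\<lambda>y. y < g x) (map g xs)) = card {b\<in>?S. g b < g x}"
    using Cons.prems by (simp add: filter_map distinct_length_filter Int_def conj_commute)
  have a2: "length (filter (\<lambda>y. y < x) xs) = card {b\<in>?S. b < x}"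
    using Cons.prems by (simp add: distinct_length_filter Int_def conj_commute)
  let ?c = "card {b\<in>?S. b < x \<and> g b < g x}"
  have tri: "\<And>b. b \<in> ?S \<Longrightarrow> b < x \<or> x < b" using xS by (metis linorder_neqE_nat)
  have tri2: "\<And>b. b \<in> ?S \<Longrightarrow> g b < g x \<or> g x < g b" using injx by (metis linorder_neqE_nat)
  have s1: "card {b\<in>?S. g b < g x} = ?c + card {b\<in>?S. x < b \<and> g b < g x}"
  proof -
    have e: "{b\<in>?S. g b < g x} = {b\<in>?S. b < x \<and> g b < g x} \<union> {b\<in>?S. x < b \<and> g b < g x}"
      using tri by blast
    have "card ({b\<in>?S. b < x \<and> g b < g x} \<union> {b\<in>?S. x < b \<and> g b < g x})
        = ?c + card {b\<in>?S. x < b \<and> g b < g x}"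
      by (rule card_Un_disjoint) auto
    then show ?thesis using e by simp
  qed
  have s2: "card {b\<in>?S. b < x} = ?c + card {a\<in>?S. a < x \<and> g x < g a}"
  proof -
    have e: "{b\<in>?S. b < x} = {b\<in>?S. b < x \<and> g b < g x} \<union> {a\<in>?S. a < x \<and> g x < g a}"
      using tri2 by blast
    have "card ({b\<in>?S. b < x \<and> g b < g x} \<union> {a\<in>?S. a < x \<and> g x < g a})
        = ?c + card {a\<in>?S. a < x \<and> g x < g a}"
      by (rule card_Un_disjoint) auto
    then show ?thesis using e by simp
  qed
  have n1: "ninv (map g (x#xs)) = length (filter (\<lambda>y. y < g x) (map g xs)) + ninv (map g xs)" by simp
  have n2: "ninv (x#xs) = length (filter (\<lambda>y. y < x) xs) + ninv xs" by simp
  have n3: "ec g (set (x#xs)) = ec g ?S + card {b\<in>?S. x < b \<and> g b < g x} + card {a\<in>?S. a < x \<and> g x < g a}"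
    using ec_insert[OF fin xS, of g] by simp
  have E: "ninv (map g (x#xs)) + ninv (x#xs) + ec g (set (x#xs)) = (ninv (map g xs) + ninv xs + ec g ?S)
     + 2 * (?c + card {b\<in>?S. x < b \<and> g b < g x} + card {a\<in>?S. a < x \<and> g x < g a})"
    unfolding n1 n2 n3 a1 a2 s1 s2 by simp
  have F: "even ((ninv (map g xs) + ninv xs + ec g ?S)
     + 2 * (?c + card {b\<in>?S. x < b \<and> g b < g x} + card {a\<in>?S. a < x \<and> g x < g a}))"
    using IH by simp
  show ?case by (subst E) (rule F)
qed

lemma neg1_pow_eq: "even (a + b) \<Longrightarrow> (-1::real) ^ a = (-1) ^ b"
  by (metis (no_types, lifting) even_add neg_one_even_power neg_one_odd_power)

lemma perm_eps_comp:
  assumes "inj_on k I" "inj_on h (k ` I)" "finite I"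
  shows "perm_eps (h \<circ> k) I = perm_eps k I * perm_eps h (k ` I)"
proof -
  let ?L = "sorted_list_of_set I"
  have d: "distinct ?L" "set ?L = I" using assms by auto
  have "even (ninv (map (h \<circ> k) ?L) + ninv ?L + ec (h \<circ> k) I)"
    using ec_parity[of ?L "h \<circ> k"] d assms by (simp add: comp_inj_on)
  moreover have "even (ninv (map h (map k ?L)) + ninv (map k ?L) + ec h (k ` I))"
    using ec_parity[of "map k ?L" h] d assms by (simp add: distinct_map)
  moreover have "even (ninv (map k ?L) + ninv ?L + ec k I)"
    using ec_parity[of ?L k] d assms by simp
  ultimately have "even (ec (h \<circ> k) I + (ec k I + ec h (k ` I)))"
    by (auto simp: even_add map_map)
  then show ?thesis unfolding perm_eps_ec power_add[symmetric] by (rule neg1_pow_eq)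
qed



lemma inv_count_ninv: "inv_count xs = ninv xs"
proof (induction xs)
  case Nil then show ?case by (simp add: inv_count_def)
next
  case (Cons x xs)
  let ?O = "{(i, j). i < j \<and> j < length xs \<and> xs ! j < xs ! i}"
  let ?N = "{j. j < length xs \<and> xs ! j < x}"
  have eq: "{(i, j). i < j \<and> j < length (x#xs) \<and> (x#xs) ! j < (x#xs) ! i}
      = (\<lambda>j. (0::nat, Suc j)) ` ?N \<union> (\<lambda>(i, j). (Suc i, Suc j)) ` ?O"
  proof (rule set_eqI, rule iffI)
    fix p assume "p \<in> {(i, j). i < j \<and> j < length (x#xs) \<and> (x#xs) ! j < (x#xs) ! i}"
    then obtain i j where p: "p = (i, j)" "i < j" "j < length (x#xs)" "(x#xs) ! j < (x#xs) ! i" by auto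
    then obtain j' where j': "j = Suc j'" by (cases j) auto
    show "p \<in> (\<lambda>j. (0::nat, Suc j)) ` ?N \<union> (\<lambda>(i, j). (Suc i, Suc j)) ` ?O"
    proof (cases i)
      case 0 then show ?thesis using p j' by auto
    next
      case (Suc i') then have "(i', j') \<in> ?O" using p j' by auto
      then show ?thesis using p j' Suc by force
    qed
  qed auto
  have "card ((\<lambda>j. (0::nat, Suc j)) ` ?N \<union> (\<lambda>(i, j). (Suc i, Suc j)) ` ?O)
      = card ((\<lambda>j. (0::nat, Suc j)) ` ?N) + card ((\<lambda>(i, j). (Suc i, Suc j)) ` ?O)"
  proof -
    have fN: "finite ?N" by simp
    have fO: "finite ?O" by (rule finite_subset[of _ "{..<length xs} \<times> {..<length xs}"]) auto
    have fa: "finite ((\<lambda>j. (0::nat, Suc j)) ` ?N)" using fN by simp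
    have fb: "finite ((\<lambda>(i, j). (Suc i, Suc j)) ` ?O)" using fO by simp
    have dj: "(\<lambda>j. (0::nat, Suc j)) ` ?N \<inter> (\<lambda>(i, j). (Suc i, Suc j)) ` ?O = {}" by auto
    show ?thesis by (rule card_Un_disjoint[OF fa fb dj])
  qed
  also have "card ((\<lambda>j. (0::nat, Suc j)) ` ?N) = card ?N" by (rule card_image) (auto simp: inj_on_def)
  also have "card ((\<lambda>(i, j). (Suc i, Suc j)) ` ?O) = card ?O" by (rule card_image) (auto simp: inj_on_def)
  also have "card ?N = length (filter (\<lambda>y. y < x) xs)" by (simp add: length_filter_conv_card)
  finally have c: "card ((\<lambda>j. (0::nat, Suc j)) ` ?N \<union> (\<lambda>(i, j). (Suc i, Suc j)) ` ?O)
      = length (filter (\<lambda>y. y < x) xs) + card ?O" .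
  have i1: "inv_count (x#xs) = card ((\<lambda>j. (0::nat, Suc j)) ` ?N \<union> (\<lambda>(i, j). (Suc i, Suc j)) ` ?O)"
    unfolding inv_count_def eq by (rule refl)
  have i2: "card ?O = ninv xs" using Cons.IH by (simp add: inv_count_def)
  show ?case by (simp only: i1 c i2 ninv.simps)
qed

definition csl :: "nat set list \<Rightarrow> nat list" where
  "csl \<rho> = concat (map sorted_list_of_set \<rho>)"

lemma part_sgn_csl: "part_sgn \<rho> = (-1) ^ ninv (csl \<rho>)"
  by (simp add: part_sgn_def csl_def inv_count_ninv)

lemma swap_parity:
  assumes "set a \<inter> set c = {}" "set a \<inter> set b = {}" "set c \<inter> set b = {}" "length a = length b"
  shows "even (ninv (p @ a @ c @ b @ q) + ninv (p @ b @ c @ a @ q) + length a)"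
proof -
  have 1: "crs a c + crs c a = length a * length c" using crs_swap assms by auto
  have 2: "crs a b + crs b a = length a * length b" using crs_swap assms by auto
  have 3: "crs c b + crs b c = length c * length b" using crs_swap assms by auto
  have e: "ninv (p @ a @ c @ b @ q) + ninv (p @ b @ c @ a @ q)
     = 2 * (ninv p + ninv a + ninv b + ninv c + ninv q + crs p a + crs p b + crs p c + crs p q
         + crs a q + crs b q + crs c q) + (crs a c + crs c a) + (crs a b + crs b a) + (crs c b + crs b c)"
    by (simp add: ninv_append crs_append1 crs_append2)
  show ?thesis unfolding e 1 2 3 using assms(4) by simp
qed

definition pdisj :: "nat set list \<Rightarrow> bool" where
  "pdisj \<rho> \<longleftrightarrow> distinct \<rho> \<and> (\<forall>A\<in>set \<rho>. \<forall>B\<in>set \<rho>. A \<noteq> B \<longrightarrow> A \<inter> B = {}) \<and> (\<forall>A\<in>set \<rho>. finite A)"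

lemma set_csl: "(\<forall>A\<in>set \<rho>. finite A) \<Longrightarrow> set (csl \<rho>) = \<Union>(set \<rho>)"
  by (auto simp: csl_def)

lemma distinct_csl: "pdisj \<rho> \<Longrightarrow> distinct (csl \<rho>)"
proof (induction \<rho>)
  case Nil then show ?case by (simp add: csl_def)
next
  case (Cons A \<rho>)
  have "pdisj \<rho>" using Cons.prems by (auto simp: pdisj_def)
  then have "distinct (csl \<rho>)" using Cons.IH by simp
  moreover have "set (csl \<rho>) = \<Union>(set \<rho>)" using Cons.prems by (intro set_csl) (auto simp: pdisj_def)
  ultimately show ?case using Cons.prems by (auto simp: csl_def pdisj_def)
qed

lemma part_sgn_swap:
  assumes "pdisj (P @ A # C @ B # Q)" "card A = card B"
  shows "part_sgn (P @ A # C @ B # Q) = (-1) ^ card A * part_sgn (P @ B # C @ A # Q)"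
proof -
  have fin: "finite A" "finite B" "\<forall>X\<in>set C. finite X" using assms by (auto simp: pdisj_def)
  have ne: "A \<noteq> B" "A \<notin> set C" "B \<notin> set C" using assms(1) by (auto simp: pdisj_def)
  have d1: "A \<inter> \<Union>(set C) = {}" "A \<inter> B = {}" "\<Union>(set C) \<inter> B = {}"
    using assms(1) ne unfolding pdisj_def by auto
  have e1: "csl (P @ A # C @ B # Q) = csl P @ sorted_list_of_set A @ csl C @ sorted_list_of_set B @ csl Q"
    by (simp add: csl_def)
  have e2: "csl (P @ B # C @ A # Q) = csl P @ sorted_list_of_set B @ csl C @ sorted_list_of_set A @ csl Q"
    by (simp add: csl_def)
  have par: "even (ninv (csl P @ sorted_list_of_set A @ csl C @ sorted_list_of_set B @ csl Q)
      + ninv (csl P @ sorted_list_of_set B @ csl C @ sorted_list_of_set A @ csl Q) + length (sorted_list_of_set A))"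
    by (rule swap_parity) (use fin d1 assms(2) in \<open>auto simp: set_csl\<close>)
  have "even (ninv (csl (P @ A # C @ B # Q)) + (card A + ninv (csl (P @ B # C @ A # Q))))"
    using par unfolding e1 e2 by (simp add: ac_simps)
  then show ?thesis unfolding part_sgn_csl power_add[symmetric] by (rule neg1_pow_eq)
qed

lemma mset_concat_cong: "(\<And>B. B \<in> set xs \<Longrightarrow> mset (h1 B) = mset (h2 B)) \<Longrightarrow>
   mset (concat (map h1 xs)) = mset (concat (map h2 xs))"
  by (induction xs) auto

lemma ninv_concat_cong:
  "(\<And>B. B \<in> set xs \<Longrightarrow> mset (h1 B) = mset (h2 B)) \<Longrightarrow>
   ninv (concat (map h1 xs)) + sum_list (map (\<lambda>B. ninv (h2 B)) xs)
   = ninv (concat (map h2 xs)) + sum_list (map (\<lambda>B. ninv (h1 B)) xs)"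
proof (induction xs)
  case Nil then show ?case by simp
next
  case (Cons x xs)
  have "crs (h1 x) (concat (map h1 xs)) = crs (h2 x) (concat (map h2 xs))"
    by (rule crs_cong) (use Cons.prems mset_concat_cong[of xs h1 h2] in auto)
  then show ?case using Cons by (simp add: ninv_append)
qed

lemma prod_list_neg1: "prod_list (map (\<lambda>B. (-1::real) ^ f B) xs) = (-1) ^ sum_list (map f xs)"
  by (induction xs) (auto simp: power_add)

lemma part_sgn_image:
  assumes "pdisj \<rho>" "inj_on g (\<Union>(set \<rho>))"
  shows "part_sgn (map ((`) g) \<rho>) = part_sgn \<rho> * perm_eps g (\<Union>(set \<rho>)) * prod_list (map (perm_eps g) \<rho>)"
proof -
  let ?L = "csl \<rho>"
  let ?h1 = "\<lambda>B. map g (sorted_list_of_set B)"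
  let ?h2 = "\<lambda>B. sorted_list_of_set (g ` B)"
  have fin: "\<forall>A\<in>set \<rho>. finite A" using assms by (simp add: pdisj_def)
  have d: "distinct ?L" using distinct_csl assms by simp
  have sL: "set ?L = \<Union>(set \<rho>)" using set_csl fin by simp
  have p0: "even (ninv (map g ?L) + ninv ?L + ec g (\<Union>(set \<rho>)))"
    using ec_parity[of ?L g] d assms sL by simp
  have mg: "map g ?L = concat (map ?h1 \<rho>)" by (simp add: csl_def map_concat comp_def)
  have ms: "\<And>B. B \<in> set \<rho> \<Longrightarrow> mset (?h1 B) = mset (?h2 B)"
  proof -
    fix B assume B: "B \<in> set \<rho>"
    have "inj_on g B" using assms(2) B by (auto intro: inj_on_subset)
    then show "mset (?h1 B) = mset (?h2 B)" using fin B
      by (metis distinct_map distinct_sorted_list_of_set finite_imageI mset_set_set set_map set_sorted_list_of_set)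
  qed
  have A: "ninv (concat (map ?h1 \<rho>)) + sum_list (map (\<lambda>B. ninv (?h2 B)) \<rho>)
       = ninv (concat (map ?h2 \<rho>)) + sum_list (map (\<lambda>B. ninv (?h1 B)) \<rho>)"
    by (rule ninv_concat_cong) (use ms in auto)
  have z: "sum_list (map (\<lambda>B. ninv (?h2 B)) \<rho>) = 0"
    by (simp add: ninv_sorted sum_list_eq_0_iff)
  have csl2: "csl (map ((`) g) \<rho>) = concat (map ?h2 \<rho>)" by (simp add: csl_def comp_def)
  have eb: "\<And>B. B \<in> set \<rho> \<Longrightarrow> (-1::real) ^ ninv (?h1 B) = perm_eps g B"
  proof -
    fix B assume B: "B \<in> set \<rho>"
    have "inj_on g B" using assms(2) B by (auto intro: inj_on_subset)
    then have "even (ninv (?h1 B) + ninv (sorted_list_of_set B) + ec g B)"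
      using ec_parity[of "sorted_list_of_set B" g] fin B by simp
    then have "even (ninv (?h1 B) + ec g B)" by (simp add: ninv_sorted)
    then show "(-1::real) ^ ninv (?h1 B) = perm_eps g B" unfolding perm_eps_ec by (rule neg1_pow_eq)
  qed
  have pr: "prod_list (map (perm_eps g) \<rho>) = (-1) ^ sum_list (map (\<lambda>B. ninv (?h1 B)) \<rho>)"
  proof -
    have m: "map (perm_eps g) \<rho> = map (\<lambda>B. (-1::real) ^ ninv (?h1 B)) \<rho>"
      by (intro map_cong) (auto simp: eb)
    show ?thesis unfolding m by (rule prod_list_neg1)
  qed
  let ?s = "sum_list (map (\<lambda>B. ninv (?h1 B)) \<rho>)"
  have "(-1::real) ^ ninv (map g ?L) = (-1) ^ (ninv ?L + ec g (\<Union>(set \<rho>)))"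
    using p0 by (intro neg1_pow_eq) (simp add: add.assoc)
  then have "(-1::real) ^ (ninv (csl (map ((`) g) \<rho>)) + ?s) = (-1) ^ ninv ?L * (-1) ^ ec g (\<Union>(set \<rho>))"
    using A z mg csl2 by (simp add: power_add)
  then have "(-1::real) ^ ninv (csl (map ((`) g) \<rho>)) * (-1) ^ ?s * (-1) ^ ?s
      = (-1) ^ ninv ?L * (-1) ^ ec g (\<Union>(set \<rho>)) * (-1) ^ ?s"
    by (simp add: power_add)
  moreover have "(-1::real) ^ ?s * (-1) ^ ?s = 1" by (simp add: power_add[symmetric])
  ultimately show ?thesis unfolding part_sgn_csl pr perm_eps_ec by (simp add: mult.assoc)
qed



lemma ml_lin:
  assumes "multilinear_into Vs W F" "length xs = length Vs" "\<forall>j<length Vs. xs ! j \<in> Vs ! j"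
    "i < length Vs" "x \<in> Vs ! i" "y \<in> Vs ! i"
  shows "F (xs[i := a *\<^sub>R x + b *\<^sub>R y]) = a *\<^sub>R F (xs[i := x]) + b *\<^sub>R F (xs[i := y])"
  using assms unfolding multilinear_into_def by blast

lemma ml_scale1:
  assumes "multilinear_into Vs W F" "length xs = length Vs" "\<forall>j<length Vs. xs ! j \<in> Vs ! j"
    "i < length Vs"
  shows "F (xs[i := c *\<^sub>R (xs ! i)]) = c *\<^sub>R F xs"
  using ml_lin[OF assms, of "xs ! i" "xs ! i" c 0] assms by simp

lemma ml_scale_all:
  assumes ml: "multilinear_into Vs W F"
    and cl: "\<And>k c x. k < length Vs \<Longrightarrow> x \<in> Vs ! k \<Longrightarrow> c *\<^sub>R x \<in> Vs ! k"
    and len: "length xs = length Vs" and inV: "\<forall>k<length Vs. xs ! k \<in> Vs ! k"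
  shows "F (map (\<lambda>k. c k *\<^sub>R xs ! k) [0..<length Vs]) = (\<Prod>k<length Vs. c k) *\<^sub>R F xs"
proof -
  let ?Z = "\<lambda>m. map (\<lambda>k. if k < m then c k *\<^sub>R xs ! k else xs ! k) [0..<length Vs]"
  have "m \<le> length Vs \<Longrightarrow> F (?Z m) = (\<Prod>k<m. c k) *\<^sub>R F xs" for m
  proof (induction m)
    case 0
    have "?Z 0 = xs" using len by (intro nth_equalityI) auto
    then show ?case by simp
  next
    case (Suc m)
    have zin: "\<forall>j<length Vs. ?Z m ! j \<in> Vs ! j" using inV cl by auto
    have "?Z (Suc m) = (?Z m)[m := c m *\<^sub>R (?Z m ! m)]"
      using Suc.prems by (intro nth_equalityI) (auto simp: nth_list_update)
    then have "F (?Z (Suc m)) = c m *\<^sub>R F (?Z m)"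
      using ml_scale1[OF ml _ zin, of m "c m"] Suc.prems by simp
    then show ?case using Suc by simp
  qed
  moreover have "?Z (length Vs) = map (\<lambda>k. c k *\<^sub>R xs ! k) [0..<length Vs]" by simp
  ultimately show ?thesis by (metis order.refl)
qed

lemma ml_scale_map:
  assumes ml: "multilinear_into (map Vf \<rho>) W F"
    and cl: "\<And>B c x. B \<in> set \<rho> \<Longrightarrow> x \<in> Vf B \<Longrightarrow> c *\<^sub>R x \<in> Vf B"
    and inV: "\<And>B. B \<in> set \<rho> \<Longrightarrow> u B \<in> Vf B"
  shows "F (map (\<lambda>B. c B *\<^sub>R u B) \<rho>) = prod_list (map c \<rho>) *\<^sub>R F (map u \<rho>)"
proof -
  have "F (map (\<lambda>k. c (\<rho> ! k) *\<^sub>R (map u \<rho>) ! k) [0..<length (map Vf \<rho>)])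
      = (\<Prod>k<length (map Vf \<rho>). c (\<rho> ! k)) *\<^sub>R F (map u \<rho>)"
    by (rule ml_scale_all[OF ml]) (use cl inV in auto)
  moreover have "map (\<lambda>k. c (\<rho> ! k) *\<^sub>R (map u \<rho>) ! k) [0..<length (map Vf \<rho>)] = map (\<lambda>B. c B *\<^sub>R u B) \<rho>"
    by (intro nth_equalityI) auto
  moreover have "(\<Prod>k<length (map Vf \<rho>). c (\<rho> ! k)) = prod_list (map c \<rho>)"
    by (induction \<rho>) (auto simp: prod.lessThan_Suc_shift simp del: prod.lessThan_Suc)
  ultimately show ?thesis by simp
qed

lemma swap_F:
  fixes F :: "'v::real_vector list \<Rightarrow> 'v"
  assumes sa: "sym_alt V ls F" and ml: "multilinear_into (map V ls) W F" and sub: "\<And>k. subspace (V k)"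
    and len: "length xs = length ls" and inV: "\<forall>k<length ls. xs ! k \<in> V (ls ! k)"
    and ij: "i < j" "j < length ls" "ls ! i = ls ! j"
  shows "F (xs[i := xs ! j, j := xs ! i]) = (-1) ^ (ls ! i) *\<^sub>R F xs"
proof (cases "even (ls ! i)")
  case True
  then show ?thesis using sa len inV ij unfolding sym_alt_def by auto
next
  case False
  have il: "i < length ls" using ij by simp
  have alt: "\<And>ys. length ys = length ls \<Longrightarrow> (\<forall>k<length ls. ys ! k \<in> V (ls ! k)) \<Longrightarrow> ys ! i = ys ! j \<Longrightarrow> F ys = 0"
    using sa ij False unfolding sym_alt_def by auto
  let ?x = "xs ! i" and ?y = "xs ! j"
  have xV1: "?x \<in> V (ls ! i)" using inV il by blast
  have xV2: "?y \<in> V (ls ! i)" by (metis ij(2) ij(3) inV)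
  note xV = xV1 xV2
  have xyV: "?x + ?y \<in> V (ls ! i)" using xV sub subspace_add by blast
  have ml': "\<And>ys k x y a b. length ys = length ls \<Longrightarrow> (\<forall>k<length ls. ys ! k \<in> V (ls ! k)) \<Longrightarrow> k < length ls
     \<Longrightarrow> x \<in> V (ls ! k) \<Longrightarrow> y \<in> V (ls ! k) \<Longrightarrow> F (ys[k := a *\<^sub>R x + b *\<^sub>R y]) = a *\<^sub>R F (ys[k := x]) + b *\<^sub>R F (ys[k := y])"
    using ml_lin[OF ml] by simp
  let ?s = "xs[i := ?x + ?y, j := ?x + ?y]"
  have sin: "\<forall>k<length ls. ?s ! k \<in> V (ls ! k)" using inV xyV ij len by (auto simp: nth_list_update)
  have s0: "F ?s = 0" by (rule alt) (use sin len ij in auto)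
  have "F ?s = F (?s[i := 1 *\<^sub>R ?x + 1 *\<^sub>R ?y])" using ij len by (simp add: list_update_swap)
  also have "\<dots> = F (?s[i := ?x]) + F (?s[i := ?y])" using ml'[of ?s i ?x ?y 1 1] sin len il xV by simp
  finally have e1: "0 = F (?s[i := ?x]) + F (?s[i := ?y])" using s0 by simp
  have a1: "?s[i := ?x] = xs[j := 1 *\<^sub>R ?x + 1 *\<^sub>R ?y]" using ij by (simp add: list_update_swap)
  have "F (xs[j := 1 *\<^sub>R ?x + 1 *\<^sub>R ?y]) = F (xs[j := ?x]) + F (xs[j := ?y])"
    using ml'[of xs j ?x ?y 1 1] len inV ij xV by simp
  moreover have "F (xs[j := ?x]) = 0" by (rule alt) (use len inV ij xV in \<open>auto simp: nth_list_update\<close>)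
  ultimately have a2: "F (?s[i := ?x]) = F xs" using a1 by simp
  let ?t = "xs[i := ?y]"
  have tin: "\<forall>k<length ls. ?t ! k \<in> V (ls ! k)" using inV xV ij len by (auto simp: nth_list_update)
  have b1: "?s[i := ?y] = ?t[j := 1 *\<^sub>R ?x + 1 *\<^sub>R ?y]" using ij by (simp add: list_update_swap)
  have "F (?t[j := 1 *\<^sub>R ?x + 1 *\<^sub>R ?y]) = F (?t[j := ?x]) + F (?t[j := ?y])"
    using ml'[of ?t j ?x ?y 1 1] len tin ij xV by simp
  moreover have "F (?t[j := ?y]) = 0" by (rule alt) (use len tin ij xV in \<open>auto simp: nth_list_update\<close>)
  ultimately have b2: "F (?s[i := ?y]) = F (xs[i := ?y, j := ?x])" using b1 by simp
  have "F (xs[i := ?y, j := ?x]) = - F xs" using e1 a2 b2 by (simp add: eq_neg_iff_add_eq_0 add.commute)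
  then show ?thesis using False by simp
qed



lemma decomp:
  assumes "i < k" "k < length X"
  shows "\<exists>P C Q. X = P @ X!i # C @ X!k # Q \<and> length P = i \<and> length C = k - Suc i"
proof -
  let ?R = "drop (Suc i) X"
  have X1: "X = take i X @ X!i # ?R" using assms by (intro id_take_nth_drop) simp
  have kl: "k - Suc i < length ?R" using assms by simp
  have R1: "?R = take (k - Suc i) ?R @ ?R ! (k - Suc i) # drop (Suc (k - Suc i)) ?R"
    by (rule id_take_nth_drop[OF kl])
  have Rk: "?R ! (k - Suc i) = X ! k" using assms by simp
  have "X = take i X @ X!i # take (k - Suc i) ?R @ X!k # drop (Suc (k - Suc i)) ?R"
    using X1 R1 Rk by (metis append_Cons)
  moreover have "length (take i X) = i" using assms by simp
  moreover have "length (take (k - Suc i) ?R) = k - Suc i" using kl by simp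
  ultimately show ?thesis by blast
qed

lemma swap_upd: "(P @ A # C @ B # Q)[length P := B, length P + Suc (length C) := A] = P @ B # C @ A # Q"
  by (simp add: list_update_append)

lemma reorder:
  fixes F :: "'v::real_vector list \<Rightarrow> 'v"
  assumes sa: "sym_alt V ls F" and ml: "multilinear_into (map V ls) W F" and sub: "\<And>k. subspace (V k)"
    and uV: "\<And>B. B \<in> set Y \<Longrightarrow> u B \<in> V (card B)"
    and pY: "pdisj Y" and cY: "map card Y = ls"
  shows "pdisj X \<Longrightarrow> set X = set Y \<Longrightarrow> map card X = ls \<Longrightarrow>
     part_sgn X *\<^sub>R F (map u X) = part_sgn Y *\<^sub>R F (map u Y)"
proof -
  have main: "\<forall>X. card {i. i < length X \<and> X!i \<noteq> Y!i} = m \<longrightarrow> pdisj X \<longrightarrow> set X = set Y \<longrightarrow> map card X = ls \<longrightarrow>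
     part_sgn X *\<^sub>R F (map u X) = part_sgn Y *\<^sub>R F (map u Y)" for m
  proof (induction m rule: less_induct)
    case (less m)
    show ?case
    proof (intro allI impI)
      fix X assume m: "card {i. i < length X \<and> X!i \<noteq> Y!i} = m" and pX: "pdisj X"
        and sXY: "set X = set Y" and cX: "map card X = ls"
      have lenXY: "length X = length Y" using cX cY by (metis length_map)
      show "part_sgn X *\<^sub>R F (map u X) = part_sgn Y *\<^sub>R F (map u Y)"
      proof (cases "X = Y")
        case True then show ?thesis by simp
      next
        case False
        then obtain i where i: "i < length X" "X!i \<noteq> Y!i" using lenXY nth_equalityI by blast
        have "Y!i \<in> set X" using sXY i lenXY by simp
        then obtain k where k: "k < length X" "X!k = Y!i" by (metis in_set_conv_nth)
        have ik: "i \<noteq> k" using i k by auto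
        have cardeq: "card (X!k) = card (X!i)"
        proof -
          have "(map card X)!i = (map card Y)!i" using cX cY by simp
          then show ?thesis using i k lenXY by simp
        qed
        define a where "a = min i k"
        define b where "b = max i k"
        have ab: "a < b" "b < length X" using ik i k unfolding a_def b_def by auto
        obtain P C Q where dec: "X = P @ X!a # C @ X!b # Q" "length P = a" "length C = b - Suc a"
          using decomp[OF ab] by (elim exE conjE) (rule that; assumption)
        define A where "A = X!a"
        define B where "B = X!b"
        have ai: "(a = i \<and> b = k) \<or> (a = k \<and> b = i)" unfolding a_def b_def by (auto simp: min_def max_def)
        have cAB: "card A = card B" unfolding A_def B_def using ai cardeq by (elim disjE) simp_all
        have dec': "X = P @ A # C @ B # Q" unfolding A_def B_def by (rule dec(1))
        define X' where "X' = P @ B # C @ A # Q"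
        have bP: "b = length P + Suc (length C)" using dec(2,3) ab by simp
        have X'upd: "X' = X[a := B, b := A]"
          unfolding X'_def using swap_upd[of P A C B Q] dec' dec(2) bP by simp
        have sX': "set X' = set X" unfolding X'_def dec' by auto
        have pX': "pdisj X'" using pX unfolding pdisj_def X'_def dec' by auto
        have cX': "map card X' = ls" using cX cAB unfolding X'_def dec' by simp
        have lenX': "length X' = length X" unfolding X'_def dec' by simp
        have dY: "distinct Y" using pY by (simp add: pdisj_def)
        have sub1: "{j. j < length X' \<and> X'!j \<noteq> Y!j} \<subseteq> {j. j < length X \<and> X!j \<noteq> Y!j} - {i}"
        proof
          fix j assume j: "j \<in> {j. j < length X' \<and> X'!j \<noteq> Y!j}"
          then have jl: "j < length X" using lenX' by simp
          have Yik: "Y!i \<noteq> Y!k" using dY i k ik lenXY by (simp add: nth_eq_iff_index_eq)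
          have "X'!j = (if j = b then X!a else if j = a then X!b else X!j)"
            unfolding X'upd A_def B_def using jl ab by (auto simp: nth_list_update)
          then show "j \<in> {j. j < length X \<and> X!j \<noteq> Y!j} - {i}"
            using j jl ai k Yik by (auto split: if_splits)
        qed
        have fin: "finite {j. j < length X \<and> X!j \<noteq> Y!j}" by simp
        have "card {j. j < length X' \<and> X'!j \<noteq> Y!j} < m"
        proof -
          have "{j. j < length X \<and> X!j \<noteq> Y!j} - {i} \<subset> {j. j < length X \<and> X!j \<noteq> Y!j}" using i by auto
          then have "{j. j < length X' \<and> X'!j \<noteq> Y!j} \<subset> {j. j < length X \<and> X!j \<noteq> Y!j}" using sub1 by blast
          then show ?thesis using psubset_card_mono[OF fin] m by simp
        qed
        then have IH: "part_sgn X' *\<^sub>R F (map u X') = part_sgn Y *\<^sub>R F (map u Y)"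
          using less.IH pX' sX' sXY cX' by blast
        have sg: "part_sgn X = (-1) ^ card A * part_sgn X'"
          unfolding X'_def dec' by (rule part_sgn_swap) (use pX dec' cAB in auto)
        have lsa: "ls ! a = card A" using cX ab unfolding A_def by auto
        have Fsw: "F (map u X') = (-1) ^ card A *\<^sub>R F (map u X)"
        proof -
          have mu: "map u X' = (map u X)[a := (map u X) ! b, b := (map u X) ! a]"
            unfolding X'upd A_def B_def using ab by (simp add: map_update)
          have lsb: "ls ! a = ls ! b" using cX cAB ab unfolding A_def B_def by auto
          have inV: "\<forall>k<length ls. (map u X) ! k \<in> V (ls ! k)"
          proof (intro allI impI)
            fix k' assume "k' < length ls"
            then have k': "k' < length X" using lenXY cY by (metis length_map)
            then have "X!k' \<in> set Y" using sXY by auto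
            then show "(map u X) ! k' \<in> V (ls ! k')" using uV k' cX by auto
          qed
          have "F ((map u X)[a := (map u X) ! b, b := (map u X) ! a]) = (-1) ^ (ls ! a) *\<^sub>R F (map u X)"
            by (rule swap_F[OF sa ml sub]) (use inV lsb ab cX in auto)
          then show ?thesis using mu lsa by simp
        qed
        have "part_sgn X *\<^sub>R F (map u X) = ((-1) ^ card A * part_sgn X') *\<^sub>R F (map u X)" using sg by simp
        also have "\<dots> = part_sgn X' *\<^sub>R ((-1) ^ card A *\<^sub>R F (map u X))" by simp
        also have "\<dots> = part_sgn X' *\<^sub>R F (map u X')" using Fsw by simp
        finally show ?thesis using IH by simp
      qed
    qed
  qed
  show "pdisj X \<Longrightarrow> set X = set Y \<Longrightarrow> map card X = ls \<Longrightarrow> ?thesis" using main by blast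
qed



lemma block_less_irrefl: "\<not> block_less A A"
  unfolding block_less_def using lexord_irreflexive[of "{(x, y). x < (y::nat)}"] by auto

lemma block_less_trans: "block_less A B \<Longrightarrow> block_less B C \<Longrightarrow> block_less A C"
proof -
  have tr: "trans {(x, y). x < (y::nat)}" by (auto simp: trans_def)
  assume "block_less A B" "block_less B C"
  then show "block_less A C" unfolding block_less_def using lexord_trans[OF _ _ tr] by auto
qed

lemma block_less_total:
  assumes "finite A" "finite B" "A \<noteq> B"
  shows "block_less A B \<or> block_less B A"
proof (cases "card A = card B")
  case False then show ?thesis unfolding block_less_def by auto
next
  case True
  have "sorted_list_of_set A \<noteq> sorted_list_of_set B"
    using assms by (metis set_sorted_list_of_set)
  moreover have "(sorted_list_of_set A, sorted_list_of_set B) \<in> lexord {(x, y). x < (y::nat)} \<or>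
      sorted_list_of_set A = sorted_list_of_set B \<or> (sorted_list_of_set B, sorted_list_of_set A) \<in> lexord {(x, y). x < (y::nat)}"
    by (rule lexord_linear) auto
  ultimately show ?thesis using True unfolding block_less_def by auto
qed

lemma sorted_bl_distinct: "sorted_wrt block_less xs \<Longrightarrow> distinct xs"
  by (induction xs) (auto simp: block_less_irrefl)

lemma sorted_bl_unique:
  "sorted_wrt block_less xs \<Longrightarrow> sorted_wrt block_less ys \<Longrightarrow> set xs = set ys \<Longrightarrow> xs = ys"
proof (induction xs arbitrary: ys)
  case Nil then show ?case by simp
next
  case (Cons x xs)
  then obtain y ys' where ys: "ys = y # ys'" by (cases ys) auto
  have dx: "distinct (x # xs)" using Cons.prems(1) by (rule sorted_bl_distinct)
  have dy: "distinct (y # ys')" using Cons.prems(2) ys by (metis sorted_bl_distinct)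
  have xy: "x = y"
  proof (rule ccontr)
    assume ne: "x \<noteq> y"
    have "y \<in> set xs" using Cons.prems(3) ys ne by auto
    then have "block_less x y" using Cons.prems(1) by auto
    moreover have "x \<in> set ys'" using Cons.prems(3) ys ne by auto
    then have "block_less y x" using Cons.prems(2) ys by auto
    ultimately show False using block_less_trans block_less_irrefl by blast
  qed
  have "set xs = set ys'" using Cons.prems(3) ys xy dx dy by auto
  then have "xs = ys'" using Cons.IH[of ys'] Cons.prems(1,2) ys by simp
  then show ?case using ys xy by simp
qed

lemma sorted_bl_exists:
  assumes "finite S" "\<forall>A\<in>S. finite A"
  shows "\<exists>xs. set xs = S \<and> sorted_wrt block_less xs"
  using assms
proof (induction S rule: finite_induct)
  case empty then show ?case by simp
next
  case (insert a S)
  then obtain xs where xs: "set xs = S" "sorted_wrt block_less xs" by auto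
  let ?ys = "filter (\<lambda>y. block_less y a) xs @ a # filter (\<lambda>y. block_less a y) xs"
  have "set ?ys = insert a S"
  proof -
    have "\<And>y. y \<in> S \<Longrightarrow> block_less y a \<or> block_less a y"
      using insert block_less_total by (metis insert_iff)
    then show ?thesis using xs by auto
  qed
  moreover have "sorted_wrt block_less ?ys"
  proof -
    have c: "\<forall>x\<in>set (filter (\<lambda>y. block_less y a) xs). \<forall>y\<in>set (a # filter (\<lambda>y. block_less a y) xs). block_less x y"
    proof (intro ballI)
      fix x y assume x: "x \<in> set (filter (\<lambda>y. block_less y a) xs)" and y: "y \<in> set (a # filter (\<lambda>y. block_less a y) xs)"
      have xa: "block_less x a" using x by simp
      have "y = a \<or> block_less a y" using y by auto
      then show "block_less x y" using xa block_less_trans by metis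
    qed
    have s1: "sorted_wrt block_less (filter (\<lambda>y. block_less y a) xs)" using xs(2) by (rule sorted_wrt_filter)
    have s2: "sorted_wrt block_less (filter (\<lambda>y. block_less a y) xs)" using xs(2) by (rule sorted_wrt_filter)
    have s3: "sorted_wrt block_less (a # filter (\<lambda>y. block_less a y) xs)" using s2 by simp
    show ?thesis unfolding sorted_wrt_append using s1 s3 c by blast
  qed
  ultimately show ?case by blast
qed

definition csort :: "nat set set \<Rightarrow> nat set list" where
  "csort S = (THE xs. set xs = S \<and> sorted_wrt block_less xs)"

lemma csort:
  assumes "finite S" "\<forall>A\<in>S. finite A"
  shows "set (csort S) = S" "sorted_wrt block_less (csort S)"
proof -
  obtain xs where xs: "set xs = S" "sorted_wrt block_less xs" using sorted_bl_exists[OF assms] by blast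
  have "set (csort S) = S \<and> sorted_wrt block_less (csort S)"
    unfolding csort_def
  proof (rule theI[of _ xs])
    show "set xs = S \<and> sorted_wrt block_less xs" using xs by simp
  next
    fix ys assume "set ys = S \<and> sorted_wrt block_less ys"
    then show "ys = xs" using xs sorted_bl_unique[of ys xs] by simp
  qed
  then show "set (csort S) = S" "sorted_wrt block_less (csort S)" by auto
qed

lemma csort_unique: "sorted_wrt block_less xs \<Longrightarrow> csort (set xs) = xs"
  unfolding csort_def
proof (rule the_equality)
  assume "sorted_wrt block_less xs"
  then show "set xs = set xs \<and> sorted_wrt block_less xs" by simp
next
  fix ys assume "sorted_wrt block_less xs" "set ys = set xs \<and> sorted_wrt block_less ys"
  then show "ys = xs" using sorted_bl_unique[of ys xs] by simp
qed

lemma canon_partitions_iff: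
  "\<rho> \<in> canon_partitions I \<longleftrightarrow> (\<forall>B\<in>set \<rho>. B \<noteq> {}) \<and> \<Union>(set \<rho>) = I \<and>
      (\<forall>A\<in>set \<rho>. \<forall>B\<in>set \<rho>. A \<noteq> B \<longrightarrow> A \<inter> B = {}) \<and> sorted_wrt block_less \<rho>"
proof
  assume r: "\<rho> \<in> canon_partitions I"
  have rr: "(\<forall>B\<in>set \<rho>. B \<noteq> {}) \<and> \<Union>(set \<rho>) = I \<and>
      (\<forall>i<length \<rho>. \<forall>j<length \<rho>. i \<noteq> j \<longrightarrow> \<rho> ! i \<inter> \<rho> ! j = {}) \<and> sorted_wrt block_less \<rho>"
    using r unfolding canon_partitions_def by (rule CollectD)
  note r1 = rr[THEN conjunct1] and r2 = rr[THEN conjunct2, THEN conjunct1]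
    and r3 = rr[THEN conjunct2, THEN conjunct2, THEN conjunct1]
    and r4 = rr[THEN conjunct2, THEN conjunct2, THEN conjunct2]
  have r5: "\<forall>A\<in>set \<rho>. \<forall>B\<in>set \<rho>. A \<noteq> B \<longrightarrow> A \<inter> B = {}"
  proof (intro ballI impI)
    fix A B assume A: "A \<in> set \<rho>" and B: "B \<in> set \<rho>" and AB: "A \<noteq> B"
    obtain i where i: "i < length \<rho>" "\<rho>!i = A" using A in_set_conv_nth[of A \<rho>] by blast
    obtain j where j: "j < length \<rho>" "\<rho>!j = B" using B in_set_conv_nth[of B \<rho>] by blast
    have "i \<noteq> j" using i(2) j(2) AB by blast
    then have "\<rho> ! i \<inter> \<rho> ! j = {}" using r3 i(1) j(1) by blast
    then show "A \<inter> B = {}" using i(2) j(2) by simp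
  qed
  show "(\<forall>B\<in>set \<rho>. B \<noteq> {}) \<and> \<Union>(set \<rho>) = I \<and>
      (\<forall>A\<in>set \<rho>. \<forall>B\<in>set \<rho>. A \<noteq> B \<longrightarrow> A \<inter> B = {}) \<and> sorted_wrt block_less \<rho>"
    by (intro conjI r1 r2 r4 r5)
next
  assume r: "(\<forall>B\<in>set \<rho>. B \<noteq> {}) \<and> \<Union>(set \<rho>) = I \<and>
      (\<forall>A\<in>set \<rho>. \<forall>B\<in>set \<rho>. A \<noteq> B \<longrightarrow> A \<inter> B = {}) \<and> sorted_wrt block_less \<rho>"
  note r1 = r[THEN conjunct1] and r2 = r[THEN conjunct2, THEN conjunct1]
    and r5 = r[THEN conjunct2, THEN conjunct2, THEN conjunct1]
    and r4 = r[THEN conjunct2, THEN conjunct2, THEN conjunct2]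
  have d: "distinct \<rho>" using r4 by (rule sorted_bl_distinct)
  have r3: "\<forall>i<length \<rho>. \<forall>j<length \<rho>. i \<noteq> j \<longrightarrow> \<rho> ! i \<inter> \<rho> ! j = {}"
  proof (intro allI impI)
    fix i j assume ij: "i < length \<rho>" "j < length \<rho>" "i \<noteq> j"
    have ne: "\<rho>!i \<noteq> \<rho>!j" using d ij by (simp add: nth_eq_iff_index_eq)
    have m: "\<rho>!i \<in> set \<rho>" "\<rho>!j \<in> set \<rho>" using ij by simp_all
    show "\<rho> ! i \<inter> \<rho> ! j = {}" using r5 m ne by blast
  qed
  show "\<rho> \<in> canon_partitions I" unfolding canon_partitions_def by (intro CollectI conjI r1 r2 r3 r4)
qed

lemma canon_pdisj: "\<rho> \<in> canon_partitions I \<Longrightarrow> finite I \<Longrightarrow> pdisj \<rho>"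
proof -
  assume r: "\<rho> \<in> canon_partitions I" and f: "finite I"
  have ri: "(\<forall>B\<in>set \<rho>. B \<noteq> {}) \<and> \<Union>(set \<rho>) = I \<and>
      (\<forall>A\<in>set \<rho>. \<forall>B\<in>set \<rho>. A \<noteq> B \<longrightarrow> A \<inter> B = {}) \<and> sorted_wrt block_less \<rho>"
    using canon_partitions_iff[THEN iffD1, OF r] .
  have "\<forall>A\<in>set \<rho>. finite A"
  proof
    fix A assume "A \<in> set \<rho>"
    then have "A \<subseteq> I" using ri by blast
    then show "finite A" using f by (rule finite_subset)
  qed
  moreover have "sorted_wrt block_less \<rho>" using ri by blast
  then have "distinct \<rho>" by (rule sorted_bl_distinct)
  moreover have "\<forall>A\<in>set \<rho>. \<forall>B\<in>set \<rho>. A \<noteq> B \<longrightarrow> A \<inter> B = {}" using ri by blast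
  ultimately show "pdisj \<rho>" unfolding pdisj_def by blast
qed

definition cimg :: "(nat \<Rightarrow> nat) \<Rightarrow> nat set list \<Rightarrow> nat set list" where
  "cimg g \<rho> = csort ((`) g ` set \<rho>)"

lemma cimg_props:
  assumes r: "\<rho> \<in> canon_partitions I" and fI: "finite I" and inj: "inj_on g I"
  shows "cimg g \<rho> \<in> canon_partitions (g ` I)" "set (cimg g \<rho>) = (`) g ` set \<rho>"
proof -
  have ri: "(\<forall>B\<in>set \<rho>. B \<noteq> {}) \<and> \<Union>(set \<rho>) = I \<and>
      (\<forall>A\<in>set \<rho>. \<forall>B\<in>set \<rho>. A \<noteq> B \<longrightarrow> A \<inter> B = {}) \<and> sorted_wrt block_less \<rho>"
    using canon_partitions_iff[THEN iffD1, OF r] .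
  have fin: "\<forall>A\<in>(`) g ` set \<rho>. finite A"
  proof
    fix A assume "A \<in> (`) g ` set \<rho>"
    then obtain B where B: "B \<in> set \<rho>" "A = g ` B" by auto
    then have "B \<subseteq> I" using ri by blast
    then have "finite B" using fI by (rule finite_subset)
    then show "finite A" using B by simp
  qed
  note cs = csort[OF _ fin, simplified]
  show s: "set (cimg g \<rho>) = (`) g ` set \<rho>" unfolding cimg_def using cs by simp
  have disj: "\<forall>A\<in>set \<rho>. \<forall>B\<in>set \<rho>. g ` A \<noteq> g ` B \<longrightarrow> g ` A \<inter> g ` B = {}"
  proof (intro ballI impI)
    fix A B assume AB: "A \<in> set \<rho>" "B \<in> set \<rho>" "g ` A \<noteq> g ` B"
    then have "A \<noteq> B" by auto
    then have "A \<inter> B = {}" using ri AB by blast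
    moreover have "A \<subseteq> I" "B \<subseteq> I" using ri AB by auto
    ultimately show "g ` A \<inter> g ` B = {}" using inj unfolding inj_on_def by blast
  qed
  have un: "\<Union>((`) g ` set \<rho>) = g ` I" using ri by auto
  have n1: "\<forall>B\<in>set (cimg g \<rho>). B \<noteq> {}" unfolding s using ri by auto
  have n2: "\<Union>(set (cimg g \<rho>)) = g ` I" unfolding s using un .
  have n3: "\<forall>A\<in>set (cimg g \<rho>). \<forall>B\<in>set (cimg g \<rho>). A \<noteq> B \<longrightarrow> A \<inter> B = {}" unfolding s using disj by blast
  have n4: "sorted_wrt block_less (cimg g \<rho>)" unfolding cimg_def using cs(2) .
  show "cimg g \<rho> \<in> canon_partitions (g ` I)"
    by (rule canon_partitions_iff[THEN iffD2]) (intro conjI n1 n2 n3 n4)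
qed

lemma sorted_card_of_bl: "sorted_wrt block_less xs \<Longrightarrow> sorted (map card xs)"
proof -
  assume "sorted_wrt block_less xs"
  then have "sorted_wrt (\<lambda>A B. card A \<le> card B) xs"
    by (rule sorted_wrt_mono_rel[rotated]) (auto simp: block_less_def)
  then show ?thesis by (simp add: sorted_wrt_map)
qed

lemma cimg_card:
  assumes r: "\<rho> \<in> canon_partitions I" and fI: "finite I" and inj: "inj_on g I"
  shows "map card (cimg g \<rho>) = map card \<rho>"
proof -
  have ri: "(\<forall>B\<in>set \<rho>. B \<noteq> {}) \<and> \<Union>(set \<rho>) = I \<and>
      (\<forall>A\<in>set \<rho>. \<forall>B\<in>set \<rho>. A \<noteq> B \<longrightarrow> A \<inter> B = {}) \<and> sorted_wrt block_less \<rho>"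
    using canon_partitions_iff[THEN iffD1, OF r] .
  have c1: "cimg g \<rho> \<in> canon_partitions (g ` I)" by (rule cimg_props(1)[OF assms])
  have s1: "set (cimg g \<rho>) = (`) g ` set \<rho>" by (rule cimg_props(2)[OF assms])
  have sc1: "sorted_wrt block_less (cimg g \<rho>)" using canon_partitions_iff[THEN iffD1, OF c1] by simp
  have d1: "distinct (cimg g \<rho>)" using sc1 by (rule sorted_bl_distinct)
  have d0: "distinct \<rho>" using ri by (intro sorted_bl_distinct) simp
  have injI: "inj_on ((`) g) (set \<rho>)"
  proof (rule inj_onI)
    fix A B assume AB: "A \<in> set \<rho>" "B \<in> set \<rho>" "g ` A = g ` B"
    have "A \<subseteq> I" "B \<subseteq> I" using ri AB by auto
    then show "A = B" using inj AB(3) by (metis inj_on_image_eq_iff)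
  qed
  have d2: "distinct (map ((`) g) \<rho>)" using d0 injI by (simp add: distinct_map)
  have "mset (cimg g \<rho>) = mset (map ((`) g) \<rho>)"
    using d1 d2 s1 by (metis list.set_map mset_set_set)
  then have m1: "mset (map card (cimg g \<rho>)) = mset (map card (map ((`) g) \<rho>))" by (metis mset_map)
  have mc: "map card (map ((`) g) \<rho>) = map card \<rho>"
  proof -
    have "\<And>B. B \<in> set \<rho> \<Longrightarrow> card (g ` B) = card B"
      using ri inj by (metis Union_upper card_image inj_on_subset)
    then show ?thesis by simp
  qed
  have m: "mset (map card (cimg g \<rho>)) = mset (map card \<rho>)" using m1 unfolding mc .
  have so1: "sorted (map card (cimg g \<rho>))" using sc1 by (rule sorted_card_of_bl)
  have so0: "sorted (map card \<rho>)" using ri by (intro sorted_card_of_bl) simp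
  show ?thesis using properties_for_sort[OF m so1] properties_for_sort[of "map card \<rho>" "map card \<rho>"] so0 by simp
qed

lemma cimg_inv:
  assumes r: "\<rho> \<in> canon_partitions I" and fI: "finite I" and inj: "inj_on g I"
    and hg: "\<And>x. x \<in> I \<Longrightarrow> h (g x) = x"
  shows "cimg h (cimg g \<rho>) = \<rho>"
proof -
  have ri: "(\<forall>B\<in>set \<rho>. B \<noteq> {}) \<and> \<Union>(set \<rho>) = I \<and>
      (\<forall>A\<in>set \<rho>. \<forall>B\<in>set \<rho>. A \<noteq> B \<longrightarrow> A \<inter> B = {}) \<and> sorted_wrt block_less \<rho>"
    using canon_partitions_iff[THEN iffD1, OF r] .
  have s1: "set (cimg g \<rho>) = (`) g ` set \<rho>" by (rule cimg_props(2)[OF assms(1-3)])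
  have fin: "finite ((`) h ` set (cimg g \<rho>))" by simp
  have eq: "(`) h ` set (cimg g \<rho>) = set \<rho>"
  proof -
    have "\<And>B. B \<in> set \<rho> \<Longrightarrow> h ` g ` B = B"
    proof -
      fix B assume "B \<in> set \<rho>"
      then have BI: "B \<subseteq> I" using ri by auto
      have "h ` g ` B = (\<lambda>x. h (g x)) ` B" by (simp add: image_image)
      also have "\<dots> = (\<lambda>x. x) ` B" using hg BI by (intro image_cong) auto
      finally show "h ` g ` B = B" by simp
    qed
    then have "(\<lambda>B. h ` g ` B) ` set \<rho> = (\<lambda>B. B) ` set \<rho>" by (intro image_cong) auto
    then show ?thesis unfolding s1 image_image by simp
  qed
  have sr: "sorted_wrt block_less \<rho>" using ri by simp
  show ?thesis unfolding cimg_def[of h] eq by (rule csort_unique[OF sr])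
qed



lemma ml_smul:
  assumes "multilinear_into Vs W f" "\<And>x. x \<in> W \<Longrightarrow> c *\<^sub>R x \<in> W"
  shows "multilinear_into Vs W (\<lambda>a. c *\<^sub>R f a)"
  using assms unfolding multilinear_into_def by (simp add: scaleR_add_right mult.commute)

lemma neg1_sq: "(-1::real) ^ n * (-1) ^ n = 1"
  by (induction n) auto

lemma part_sgn_sq: "part_sgn \<rho> * part_sgn \<rho> = 1"
  unfolding part_sgn_def by (rule neg1_sq)

lemma prod_eps_sq: "prod_list (map (perm_eps g) \<rho>) * prod_list (map (perm_eps g) \<rho>) = 1"
proof -
  have m: "map (perm_eps g) \<rho> = map (\<lambda>B. (-1::real) ^ ec g B) \<rho>" by (intro map_cong) (simp_all add: perm_eps_ec)
  show ?thesis unfolding m prod_list_neg1 by (rule neg1_sq)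
qed

lemma Idx_sub: "I \<in> Idx n \<Longrightarrow> B \<in> set \<rho> \<Longrightarrow> \<rho> \<in> canon_partitions I \<Longrightarrow> B \<in> Idx n"
proof -
  assume I: "I \<in> Idx n" and B: "B \<in> set \<rho>" and r: "\<rho> \<in> canon_partitions I"
  have ri: "(\<forall>B\<in>set \<rho>. B \<noteq> {}) \<and> \<Union>(set \<rho>) = I \<and>
      (\<forall>A\<in>set \<rho>. \<forall>B\<in>set \<rho>. A \<noteq> B \<longrightarrow> A \<inter> B = {}) \<and> sorted_wrt block_less \<rho>"
    using canon_partitions_iff[THEN iffD1, OF r] .
  have "B \<noteq> {}" using ri B by blast
  moreover have "B \<subseteq> I" using ri B by blast
  ultimately show "B \<in> Idx n" using I unfolding Idx_def by blast
qed

lemma Idx_perm: "g permutes {1..n} \<Longrightarrow> I \<in> Idx n \<Longrightarrow> g ` I \<in> Idx n"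
proof -
  assume g: "g permutes {1..n}" and I: "I \<in> Idx n"
  have "I \<subseteq> {1..n}" "I \<noteq> {}" using I unfolding Idx_def by auto
  moreover have "g ` {1..n} = {1..n}" using permutes_image[OF g] .
  ultimately show ?thesis unfolding Idx_def by blast
qed

lemma Idx_card: "g permutes {1..n} \<Longrightarrow> card (g ` I) = card I"
  using permutes_inj_on by (metis card_image)

lemma term_eq:
  fixes Om :: "nat set list \<Rightarrow> 'v::real_vector list \<Rightarrow> 'v" and V :: "nat \<Rightarrow> 'v set"
  assumes g: "g permutes {1..n}" and I: "I \<in> Idx n" and r: "\<rho> \<in> canon_partitions I"
    and sub: "\<And>k. subspace (V k)" and vV: "\<And>B. B \<in> Idx n \<Longrightarrow> v B \<in> V (card B)"
    and ml: "multilinear_into (map (\<lambda>B. V (card B)) \<rho>) (V (card I)) (Om \<rho>)"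
    and ml': "multilinear_into (map (\<lambda>B. V (card B)) (cimg g \<rho>)) (V (card (g ` I))) (Om (cimg g \<rho>))"
    and c2: "\<And>a. part_sgn \<rho> *\<^sub>R Om \<rho> a = part_sgn (cimg g \<rho>) *\<^sub>R Om (cimg g \<rho>) a"
    and c3: "sym_alt V (map card (cimg g \<rho>)) (\<lambda>a. part_sgn (cimg g \<rho>) *\<^sub>R Om (cimg g \<rho>) a)"
  shows "Om \<rho> (map (\<lambda>B. perm_eps g B *\<^sub>R v (g ` B)) \<rho>) = perm_eps g I *\<^sub>R Om (cimg g \<rho>) (map v (cimg g \<rho>))"
proof -
  let ?r' = "cimg g \<rho>"
  let ?X = "map ((`) g) \<rho>"
  let ?F = "\<lambda>a. part_sgn ?r' *\<^sub>R Om ?r' a"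
  let ?P = "prod_list (map (perm_eps g) \<rho>)"
  have fI: "finite I" using I unfolding Idx_def by (auto intro: finite_subset)
  have injg: "inj_on g A" for A using permutes_inj_on[OF g] .
  have r': "?r' \<in> canon_partitions (g ` I)" by (rule cimg_props(1)[OF r fI injg])
  have sr': "set ?r' = (`) g ` set \<rho>" by (rule cimg_props(2)[OF r fI injg])
  have cr': "map card ?r' = map card \<rho>" by (rule cimg_card[OF r fI injg])
  have gI: "g ` I \<in> Idx n" by (rule Idx_perm[OF g I])
  have fgI: "finite (g ` I)" using fI by simp
  have ri: "(\<forall>B\<in>set \<rho>. B \<noteq> {}) \<and> \<Union>(set \<rho>) = I \<and>
      (\<forall>A\<in>set \<rho>. \<forall>B\<in>set \<rho>. A \<noteq> B \<longrightarrow> A \<inter> B = {}) \<and> sorted_wrt block_less \<rho>"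
    using canon_partitions_iff[THEN iffD1, OF r] .
  have BIdx: "\<And>B. B \<in> set \<rho> \<Longrightarrow> B \<in> Idx n" using Idx_sub[OF I _ r] by blast
  have pr: "pdisj \<rho>" by (rule canon_pdisj[OF r fI])
  have pr': "pdisj ?r'" by (rule canon_pdisj[OF r' fgI])
  have s1: "Om \<rho> (map (\<lambda>B. perm_eps g B *\<^sub>R v (g ` B)) \<rho>) = ?P *\<^sub>R Om \<rho> (map (\<lambda>B. v (g ` B)) \<rho>)"
  proof (rule ml_scale_map[OF ml])
    fix B c x assume "B \<in> set \<rho>" "x \<in> V (card B)"
    then show "c *\<^sub>R x \<in> V (card B)" using sub subspace_scale by blast
  next
    fix B assume B: "B \<in> set \<rho>"
    have "v (g ` B) \<in> V (card (g ` B))" using vV Idx_perm[OF g BIdx[OF B]] by blast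
    then show "v (g ` B) \<in> V (card B)" using Idx_card[OF g] by simp
  qed
  have mX: "map (\<lambda>B. v (g ` B)) \<rho> = map v ?X" by simp
  have s2: "Om \<rho> a = part_sgn \<rho> *\<^sub>R ?F a" for a
  proof -
    have "part_sgn \<rho> *\<^sub>R (part_sgn \<rho> *\<^sub>R Om \<rho> a) = part_sgn \<rho> *\<^sub>R ?F a" using c2 by simp
    then show ?thesis using part_sgn_sq[of \<rho>] by (simp add: scaleR_scaleR)
  qed
  have mlF: "multilinear_into (map V (map card ?r')) (V (card (g ` I))) ?F"
  proof -
    have "map V (map card ?r') = map (\<lambda>B. V (card B)) ?r'" by simp
    then show ?thesis using ml_smul[OF ml', of "part_sgn ?r'"] sub subspace_scale by metis
  qed
  have pX: "pdisj ?X"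
  proof -
    have d0: "distinct \<rho>" using pr by (simp add: pdisj_def)
    have injI: "inj_on ((`) g) (set \<rho>)"
      by (rule inj_onI) (metis injg inj_on_image_eq_iff subset_UNIV)
    have "distinct ?X" using d0 injI by (simp add: distinct_map)
    moreover have "\<forall>A\<in>set ?X. \<forall>B\<in>set ?X. A \<noteq> B \<longrightarrow> A \<inter> B = {}"
    proof (intro ballI impI)
      fix A B assume A: "A \<in> set ?X" and B: "B \<in> set ?X" and AB: "A \<noteq> B"
      obtain A0 where A0: "A0 \<in> set \<rho>" "A = g ` A0" using A by auto
      obtain B0 where B0: "B0 \<in> set \<rho>" "B = g ` B0" using B by auto
      have "A0 \<noteq> B0" using A0 B0 AB by blast
      then have "A0 \<inter> B0 = {}" using pr A0 B0 unfolding pdisj_def by blast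
      then show "A \<inter> B = {}" using A0 B0 injg[of UNIV] by (auto simp: inj_on_def)
    qed
    moreover have "\<forall>A\<in>set ?X. finite A" using pr unfolding pdisj_def by auto
    ultimately show ?thesis unfolding pdisj_def by blast
  qed
  have s3: "part_sgn ?X *\<^sub>R ?F (map v ?X) = part_sgn ?r' *\<^sub>R ?F (map v ?r')"
  proof (rule reorder[OF c3 mlF sub _ pr' refl pX])
    fix B assume "B \<in> set ?r'"
    then obtain B0 where "B0 \<in> set \<rho>" "B = g ` B0" using sr' by auto
    then show "v B \<in> V (card B)" using vV Idx_perm[OF g BIdx] by blast
  next
    show "set ?X = set ?r'" using sr' by simp
  next
    show "map card ?X = map card ?r'" using cr' Idx_card[OF g] by simp
  qed
  have s3': "?F (map v ?X) = (part_sgn ?X * part_sgn ?r') *\<^sub>R ?F (map v ?r')"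
  proof -
    have "?F (map v ?X) = (part_sgn ?X * part_sgn ?X) *\<^sub>R ?F (map v ?X)"
      by (simp only: part_sgn_sq[of ?X] scaleR_one)
    also have "\<dots> = part_sgn ?X *\<^sub>R (part_sgn ?X *\<^sub>R ?F (map v ?X))"
      by (simp only: scaleR_scaleR mult.assoc)
    also have "\<dots> = part_sgn ?X *\<^sub>R (part_sgn ?r' *\<^sub>R ?F (map v ?r'))"
      by (subst s3) (rule refl)
    also have "\<dots> = (part_sgn ?X * part_sgn ?r') *\<^sub>R ?F (map v ?r')"
      by (simp only: scaleR_scaleR mult.assoc)
    finally show ?thesis .
  qed
  have un: "\<Union>(set \<rho>) = I" using ri[THEN conjunct2, THEN conjunct1] .
  have s4: "part_sgn ?X = part_sgn \<rho> * perm_eps g I * ?P"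
    using part_sgn_image[OF pr injg[of "\<Union>(set \<rho>)"]] un by simp
  have "Om \<rho> (map (\<lambda>B. perm_eps g B *\<^sub>R v (g ` B)) \<rho>) = ?P *\<^sub>R Om \<rho> (map v ?X)"
    unfolding mX[symmetric] by (rule s1)
  also have "\<dots> = ?P *\<^sub>R (part_sgn \<rho> *\<^sub>R ?F (map v ?X))"
    by (subst s2) (rule refl)
  also have "\<dots> = (?P * part_sgn \<rho> * part_sgn ?X * part_sgn ?r' * part_sgn ?r') *\<^sub>R Om ?r' (map v ?r')"
    by (subst s3') (simp only: scaleR_scaleR mult.assoc)
  also have "?P * part_sgn \<rho> * part_sgn ?X * part_sgn ?r' * part_sgn ?r' = perm_eps g I"
  proof -
    have "?P * part_sgn \<rho> * part_sgn ?X * part_sgn ?r' * part_sgn ?r'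
        = perm_eps g I * (?P * ?P) * (part_sgn \<rho> * part_sgn \<rho>) * (part_sgn ?r' * part_sgn ?r')"
      unfolding s4 by (simp add: ac_simps)
    then show ?thesis using part_sgn_sq prod_eps_sq by simp
  qed
  finally show ?thesis .
qed



lemma sum_eq:
  fixes Om :: "nat set list \<Rightarrow> 'v::real_vector list \<Rightarrow> 'v" and V :: "nat \<Rightarrow> 'v set"
  assumes s: "\<sigma> permutes {1..n}" and I: "I \<in> Idx n"
    and sub: "\<And>k. subspace (V k)" and vV: "\<And>B. B \<in> Idx n \<Longrightarrow> v B \<in> V (card B)"
    and mlall: "\<forall>J\<in>Idx n. \<forall>\<rho>\<in>canon_partitions J. multilinear_into (map (\<lambda>B. V (card B)) \<rho>) (V (card J)) (Om \<rho>)"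
    and c2all: "\<forall>J\<in>Idx n. \<forall>K\<in>Idx n. \<forall>\<rho>1\<in>canon_partitions J. \<forall>\<rho>2\<in>canon_partitions K.
        map card \<rho>1 = map card \<rho>2 \<longrightarrow> (\<forall>a. part_sgn \<rho>1 *\<^sub>R Om \<rho>1 a = part_sgn \<rho>2 *\<^sub>R Om \<rho>2 a)"
    and c3all: "\<forall>J\<in>Idx n. \<forall>\<rho>\<in>canon_partitions J. sym_alt V (map card \<rho>) (\<lambda>a. part_sgn \<rho> *\<^sub>R Om \<rho> a)"
  shows "(\<Sum>\<rho>\<in>canon_partitions I. Om \<rho> (map (\<lambda>B. perm_eps (inv \<sigma>) B *\<^sub>R v (inv \<sigma> ` B)) \<rho>))
     = perm_eps (inv \<sigma>) I *\<^sub>R (\<Sum>\<rho>\<in>canon_partitions (inv \<sigma> ` I). Om \<rho> (map v \<rho>))"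
proof -
  let ?g = "inv \<sigma>"
  have g: "?g permutes {1..n}" by (rule permutes_inv[OF s])
  have fI: "finite I" using I unfolding Idx_def by (auto intro: finite_subset)
  have gI: "?g ` I \<in> Idx n" by (rule Idx_perm[OF g I])
  have fgI: "finite (?g ` I)" using fI by simp
  have injg: "inj_on ?g A" for A using permutes_inj_on[OF g] .
  have injs: "inj_on \<sigma> A" for A using permutes_inj_on[OF s] .
  have tm: "\<And>\<rho>. \<rho> \<in> canon_partitions I \<Longrightarrow>
      Om \<rho> (map (\<lambda>B. perm_eps ?g B *\<^sub>R v (?g ` B)) \<rho>) = perm_eps ?g I *\<^sub>R Om (cimg ?g \<rho>) (map v (cimg ?g \<rho>))"
  proof -
    fix \<rho> assume r: "\<rho> \<in> canon_partitions I"
    have r': "cimg ?g \<rho> \<in> canon_partitions (?g ` I)" by (rule cimg_props(1)[OF r fI injg])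
    have cr': "map card (cimg ?g \<rho>) = map card \<rho>" by (rule cimg_card[OF r fI injg])
    show "Om \<rho> (map (\<lambda>B. perm_eps ?g B *\<^sub>R v (?g ` B)) \<rho>) = perm_eps ?g I *\<^sub>R Om (cimg ?g \<rho>) (map v (cimg ?g \<rho>))"
    proof (rule term_eq[where Om=Om and V=V and v=v and g="?g" and n=n and I=I and \<rho>=\<rho>])
      show "?g permutes {1..n}" by (rule g)
      show "I \<in> Idx n" by (rule I)
      show "\<rho> \<in> canon_partitions I" by (rule r)
      show "\<And>k. subspace (V k)" by (rule sub)
      show "\<And>B. B \<in> Idx n \<Longrightarrow> v B \<in> V (card B)" by (rule vV)
      show "multilinear_into (map (\<lambda>B. V (card B)) \<rho>) (V (card I)) (Om \<rho>)" using mlall I r by blast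
      show "multilinear_into (map (\<lambda>B. V (card B)) (cimg ?g \<rho>)) (V (card (?g ` I))) (Om (cimg ?g \<rho>))"
        using mlall gI r' by blast
      show "\<And>a. part_sgn \<rho> *\<^sub>R Om \<rho> a = part_sgn (cimg ?g \<rho>) *\<^sub>R Om (cimg ?g \<rho>) a"
        using c2all I gI r r' cr' by metis
      show "sym_alt V (map card (cimg ?g \<rho>)) (\<lambda>a. part_sgn (cimg ?g \<rho>) *\<^sub>R Om (cimg ?g \<rho>) a)"
        using c3all gI r' by blast
    qed
  qed
  have bij: "bij_betw (cimg ?g) (canon_partitions I) (canon_partitions (?g ` I))"
  proof (rule bij_betw_byWitness[where f' = "cimg \<sigma>"])
    show "\<forall>a\<in>canon_partitions I. cimg \<sigma> (cimg ?g a) = a"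
      using cimg_inv[OF _ fI injg] permutes_inverses(1)[OF s] by blast
    show "\<forall>a\<in>canon_partitions (?g ` I). cimg ?g (cimg \<sigma> a) = a"
      using cimg_inv[OF _ fgI injs] permutes_inverses(2)[OF s] by blast
    show "cimg ?g ` canon_partitions I \<subseteq> canon_partitions (?g ` I)"
      using cimg_props(1)[OF _ fI injg] by blast
    have eqI: "\<sigma> ` ?g ` I = I" by (simp add: image_comp permutes_inv_o(1)[OF s])
    show "cimg \<sigma> ` canon_partitions (?g ` I) \<subseteq> canon_partitions I"
    proof
      fix y assume "y \<in> cimg \<sigma> ` canon_partitions (?g ` I)"
      then obtain x where x: "x \<in> canon_partitions (?g ` I)" "y = cimg \<sigma> x" by auto
      show "y \<in> canon_partitions I" using cimg_props(1)[OF x(1) fgI injs] eqI x(2) by simp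
    qed
  qed
  have "(\<Sum>\<rho>\<in>canon_partitions I. Om \<rho> (map (\<lambda>B. perm_eps ?g B *\<^sub>R v (?g ` B)) \<rho>))
      = (\<Sum>\<rho>\<in>canon_partitions I. perm_eps ?g I *\<^sub>R Om (cimg ?g \<rho>) (map v (cimg ?g \<rho>)))"
    by (rule sum.cong) (simp_all add: tm)
  also have "\<dots> = perm_eps ?g I *\<^sub>R (\<Sum>\<rho>\<in>canon_partitions I. Om (cimg ?g \<rho>) (map v (cimg ?g \<rho>)))"
    by (simp add: scaleR_sum_right)
  also have "(\<Sum>\<rho>\<in>canon_partitions I. Om (cimg ?g \<rho>) (map v (cimg ?g \<rho>)))
      = (\<Sum>\<rho>\<in>canon_partitions (?g ` I). Om \<rho> (map v \<rho>))"
    by (rule sum.reindex_bij_betw[OF bij])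
  finally show ?thesis .
qed



definition Tsp :: "nat \<Rightarrow> 'm topology \<Rightarrow> (nat \<Rightarrow> 'v::real_normed_vector set) \<Rightarrow> 'm set \<Rightarrow> ('m \<times> (nat set \<Rightarrow> 'v)) set" where
  "Tsp n M V U = (topspace M \<inter> U) \<times> (PiE (Idx n) (\<lambda>I. V (card I)))"

lemma chart_facts:
  assumes "nfold_chart n M E \<pi> V U \<Theta>"
  shows "\<Theta> ` chart_domain E \<pi> U = Tsp n M V U" "inj_on \<Theta> (chart_domain E \<pi> U)"
    "\<And>e. e \<in> chart_domain E \<pi> U \<Longrightarrow> fst (\<Theta> e) = \<pi> e"
proof -
  have h: "homeomorphic_map (subtopology E (chart_domain E \<pi> U))
        (prod_topology (subtopology M U) (fiber_top n V)) \<Theta>"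
    using assms unfolding nfold_chart_def by blast
  have tD: "topspace (subtopology E (chart_domain E \<pi> U)) = chart_domain E \<pi> U"
    unfolding chart_domain_def by auto
  have tT: "topspace (prod_topology (subtopology M U) (fiber_top n V)) = Tsp n M V U"
    unfolding Tsp_def fiber_top_def by (simp add: o_def)
  show "\<Theta> ` chart_domain E \<pi> U = Tsp n M V U"
    using homeomorphic_imp_surjective_map[OF h] tD tT by simp
  show "inj_on \<Theta> (chart_domain E \<pi> U)"
    using homeomorphic_imp_injective_map[OF h] tD by simp
  show "\<And>e. e \<in> chart_domain E \<pi> U \<Longrightarrow> fst (\<Theta> e) = \<pi> e"
    using assms unfolding nfold_chart_def by blast
qed

lemma lp_in:
  assumes s: "\<sigma> permutes {1..n}" and sub: "\<And>k. subspace (V k)" and x: "x \<in> Tsp n M V U"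
  shows "local_perm n \<sigma> x \<in> Tsp n M V U"
proof -
  have g: "inv \<sigma> permutes {1..n}" by (rule permutes_inv[OF s])
  have "snd (local_perm n \<sigma> x) \<in> PiE (Idx n) (\<lambda>I. V (card I))"
    unfolding local_perm_def snd_conv restrict_PiE_iff
  proof
    fix I assume I: "I \<in> Idx n"
    have gI: "inv \<sigma> ` I \<in> Idx n" by (rule Idx_perm[OF g I])
    have "snd x (inv \<sigma> ` I) \<in> V (card (inv \<sigma> ` I))" using x gI unfolding Tsp_def by auto
    then have "snd x (inv \<sigma> ` I) \<in> V (card I)" using Idx_card[OF g] by simp
    then show "perm_eps (inv \<sigma>) I *\<^sub>R snd x (inv \<sigma> ` I) \<in> V (card I)" using sub subspace_scale by blast
  qed
  moreover have "fst (local_perm n \<sigma> x) = fst x" by (simp add: local_perm_def)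
  ultimately show ?thesis using x unfolding Tsp_def mem_Times_iff by auto
qed

lemma lp_id:
  assumes x: "x \<in> Tsp n M V U"
  shows "local_perm n id x = x"
proof -
  have e: "perm_eps id I = 1" for I
  proof -
    have em: "{(a, b). a \<in> I \<and> b \<in> I \<and> a < b \<and> id a > id b} = {}" by auto
    show ?thesis unfolding perm_eps_def em by simp
  qed
  have ext: "snd x \<in> extensional (Idx n)" using x unfolding Tsp_def by (auto simp: PiE_def)
  have "(\<lambda>I\<in>Idx n. perm_eps (inv id) I *\<^sub>R snd x (inv id ` I)) = snd x"
    using ext by (auto simp: e extensional_def)
  then show ?thesis unfolding local_perm_def by simp
qed

lemma lp_comp:
  assumes s: "\<sigma> permutes {1..n}" and t: "\<tau> permutes {1..n}" and x: "x \<in> Tsp n M V U"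
  shows "local_perm n (\<sigma> \<circ> \<tau>) x = local_perm n \<sigma> (local_perm n \<tau> x)"
proof -
  have gs: "inv \<sigma> permutes {1..n}" by (rule permutes_inv[OF s])
  have io: "inv (\<sigma> \<circ> \<tau>) = inv \<tau> \<circ> inv \<sigma>"
    by (rule o_inv_distrib[OF permutes_bij[OF s] permutes_bij[OF t]])
  have "(\<lambda>I\<in>Idx n. perm_eps (inv (\<sigma> \<circ> \<tau>)) I *\<^sub>R snd x (inv (\<sigma> \<circ> \<tau>) ` I))
      = (\<lambda>I\<in>Idx n. perm_eps (inv \<sigma>) I *\<^sub>R (\<lambda>J\<in>Idx n. perm_eps (inv \<tau>) J *\<^sub>R snd x (inv \<tau> ` J)) (inv \<sigma> ` I))"
  proof (rule restrict_ext)
    fix I assume I: "I \<in> Idx n"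
    have gI: "inv \<sigma> ` I \<in> Idx n" by (rule Idx_perm[OF gs I])
    have fI: "finite I" using I unfolding Idx_def by (auto intro: finite_subset)
    have pe: "perm_eps (inv \<tau> \<circ> inv \<sigma>) I = perm_eps (inv \<sigma>) I * perm_eps (inv \<tau>) (inv \<sigma> ` I)"
      by (rule perm_eps_comp) (use permutes_inj_on[OF gs] permutes_inj_on[OF permutes_inv[OF t]] fI in auto)
    show "perm_eps (inv (\<sigma> \<circ> \<tau>)) I *\<^sub>R snd x (inv (\<sigma> \<circ> \<tau>) ` I)
      = perm_eps (inv \<sigma>) I *\<^sub>R (\<lambda>J\<in>Idx n. perm_eps (inv \<tau>) J *\<^sub>R snd x (inv \<tau> ` J)) (inv \<sigma> ` I)"
      using gI unfolding io pe by (simp add: image_comp)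
  qed
  then show ?thesis unfolding local_perm_def by simp
qed



theorem mainTheorem13:
  fixes n :: nat and M :: "'m topology" and E :: "'e topology" and \<pi> :: "'e \<Rightarrow> 'm"
    and V :: "nat \<Rightarrow> 'v::euclidean_space set" and \<Lambda> :: "'a set" and U :: "'a \<Rightarrow> 'm set"
    and \<Theta> :: "'a \<Rightarrow> 'e \<Rightarrow> 'm \<times> (nat set \<Rightarrow> 'v)"
  assumes "symmetric_nfold_atlas n M E \<pi> V \<Lambda> U \<Theta>"
  shows "\<exists>\<Phi> :: (nat \<Rightarrow> nat) \<Rightarrow> 'e \<Rightarrow> 'e.
           (\<forall>\<sigma>. \<sigma> permutes {1..n} \<longrightarrow>
              (\<forall>\<alpha>\<in>\<Lambda>. \<forall>e\<in>chart_domain E \<pi> (U \<alpha>).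
                 \<Phi> \<sigma> e \<in> chart_domain E \<pi> (U \<alpha>) \<and>
                 \<Theta> \<alpha> (\<Phi> \<sigma> e) = local_perm n \<sigma> (\<Theta> \<alpha> e))) \<and>
           (\<forall>e\<in>topspace E. \<Phi> id e = e) \<and>
           (\<forall>\<sigma> \<tau>. \<sigma> permutes {1..n} \<longrightarrow> \<tau> permutes {1..n} \<longrightarrow>
              (\<forall>e\<in>topspace E. \<Phi> (\<sigma> \<circ> \<tau>) e = \<Phi> \<sigma> (\<Phi> \<tau> e)))"
proof -
  note A = assms[unfolded symmetric_nfold_atlas_def]
  have cont: "continuous_map E M \<pi>" using A by (rule conjunct1)
  have sub: "\<And>k. subspace (V k)" using A[THEN conjunct2, THEN conjunct1] by blast
  have charts: "\<And>\<alpha>. \<alpha> \<in> \<Lambda> \<Longrightarrow> nfold_chart n M E \<pi> V (U \<alpha>) (\<Theta> \<alpha>)"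
    using A[THEN conjunct2, THEN conjunct2, THEN conjunct1] by blast
  have cover: "topspace M \<subseteq> (\<Union>\<alpha>\<in>\<Lambda>. U \<alpha>)"
    using A[THEN conjunct2, THEN conjunct2, THEN conjunct2, THEN conjunct1] .
  have trans: "\<forall>\<alpha>\<in>\<Lambda>. \<forall>\<beta>\<in>\<Lambda>. \<exists>\<omega>.
        chart_transition n M E \<pi> V (U \<alpha>) (\<Theta> \<alpha>) (U \<beta>) (\<Theta> \<beta>) \<omega> \<and>
        (\<forall>I\<in>Idx n. \<forall>J\<in>Idx n. \<forall>\<rho>1\<in>canon_partitions I. \<forall>\<rho>2\<in>canon_partitions J.
           map card \<rho>1 = map card \<rho>2 \<longrightarrow>
           (\<forall>p\<in>U \<alpha> \<inter> U \<beta>. \<forall>args. part_sgn \<rho>1 *\<^sub>R \<omega> p \<rho>1 args = part_sgn \<rho>2 *\<^sub>R \<omega> p \<rho>2 args)) \<and>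
        (\<forall>I\<in>Idx n. \<forall>\<rho>\<in>canon_partitions I. \<forall>p\<in>U \<alpha> \<inter> U \<beta>.
           sym_alt V (map card \<rho>) (\<lambda>args. part_sgn \<rho> *\<^sub>R \<omega> p \<rho> args))"
    using A[THEN conjunct2, THEN conjunct2, THEN conjunct2, THEN conjunct2] .
  let ?D = "\<lambda>\<alpha>. chart_domain E \<pi> (U \<alpha>)"
  have img: "\<And>\<alpha>. \<alpha> \<in> \<Lambda> \<Longrightarrow> \<Theta> \<alpha> ` ?D \<alpha> = Tsp n M V (U \<alpha>)" using chart_facts(1)[OF charts] .
  have inj: "\<And>\<alpha>. \<alpha> \<in> \<Lambda> \<Longrightarrow> inj_on (\<Theta> \<alpha>) (?D \<alpha>)" using chart_facts(2)[OF charts] .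
  have fstT: "\<And>\<alpha> e. \<alpha> \<in> \<Lambda> \<Longrightarrow> e \<in> ?D \<alpha> \<Longrightarrow> fst (\<Theta> \<alpha> e) = \<pi> e" using chart_facts(3)[OF charts] .
  have inT: "\<And>\<alpha> e. \<alpha> \<in> \<Lambda> \<Longrightarrow> e \<in> ?D \<alpha> \<Longrightarrow> \<Theta> \<alpha> e \<in> Tsp n M V (U \<alpha>)" using img by blast
  have compat: "\<And>\<alpha> \<beta> \<sigma> e e'. \<alpha> \<in> \<Lambda> \<Longrightarrow> \<beta> \<in> \<Lambda> \<Longrightarrow> \<sigma> permutes {1..n} \<Longrightarrow> e \<in> ?D \<alpha> \<Longrightarrow> e \<in> ?D \<beta>
      \<Longrightarrow> e' \<in> ?D \<alpha> \<Longrightarrow> \<Theta> \<alpha> e' = local_perm n \<sigma> (\<Theta> \<alpha> e)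
      \<Longrightarrow> e' \<in> ?D \<beta> \<and> \<Theta> \<beta> e' = local_perm n \<sigma> (\<Theta> \<beta> e)"
  proof -
    fix \<alpha> \<beta> \<sigma> e e'
    assume a: "\<alpha> \<in> \<Lambda>" and b: "\<beta> \<in> \<Lambda>" and s: "\<sigma> permutes {1..n}" and ea: "e \<in> ?D \<alpha>" and eb: "e \<in> ?D \<beta>"
      and e'a: "e' \<in> ?D \<alpha>" and th: "\<Theta> \<alpha> e' = local_perm n \<sigma> (\<Theta> \<alpha> e)"
    let ?g = "inv \<sigma>"
    have g: "?g permutes {1..n}" by (rule permutes_inv[OF s])
    have pe': "\<pi> e' = \<pi> e"
    proof -
      have "\<pi> e' = fst (\<Theta> \<alpha> e')" using fstT[OF a e'a] by simp
      also have "\<dots> = fst (\<Theta> \<alpha> e)" unfolding th by (simp add: local_perm_def)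
      also have "\<dots> = \<pi> e" using fstT[OF a ea] .
      finally show ?thesis .
    qed
    have e'b: "e' \<in> ?D \<beta>" using e'a eb pe' unfolding chart_domain_def by auto
    obtain \<omega> where ct: "chart_transition n M E \<pi> V (U \<alpha>) (\<Theta> \<alpha>) (U \<beta>) (\<Theta> \<beta>) \<omega>"
      and c2: "\<forall>I\<in>Idx n. \<forall>J\<in>Idx n. \<forall>\<rho>1\<in>canon_partitions I. \<forall>\<rho>2\<in>canon_partitions J.
           map card \<rho>1 = map card \<rho>2 \<longrightarrow>
           (\<forall>p\<in>U \<alpha> \<inter> U \<beta>. \<forall>args. part_sgn \<rho>1 *\<^sub>R \<omega> p \<rho>1 args = part_sgn \<rho>2 *\<^sub>R \<omega> p \<rho>2 args)"
      and c3: "\<forall>I\<in>Idx n. \<forall>\<rho>\<in>canon_partitions I. \<forall>p\<in>U \<alpha> \<inter> U \<beta>.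
           sym_alt V (map card \<rho>) (\<lambda>args. part_sgn \<rho> *\<^sub>R \<omega> p \<rho> args)"
      using trans a b by blast
    have mlc: "\<forall>I\<in>Idx n. \<forall>\<rho>\<in>canon_partitions I.
        (\<forall>p\<in>U \<alpha> \<inter> U \<beta>. multilinear_into (map (\<lambda>B. V (card B)) \<rho>) (V (card I)) (\<omega> p \<rho>))"
      using ct unfolding chart_transition_def by blast
    have teq: "\<forall>x\<in>chart_domain E \<pi> (U \<alpha> \<inter> U \<beta>).
        \<Theta> \<beta> x = (\<pi> x, \<lambda>I\<in>Idx n. \<Sum>\<rho>\<in>canon_partitions I. \<omega> (\<pi> x) \<rho> (map (snd (\<Theta> \<alpha> x)) \<rho>))"
      using ct unfolding chart_transition_def by blast
    have eab: "e \<in> chart_domain E \<pi> (U \<alpha> \<inter> U \<beta>)" using ea eb unfolding chart_domain_def by auto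
    have e'ab: "e' \<in> chart_domain E \<pi> (U \<alpha> \<inter> U \<beta>)" using e'a e'b unfolding chart_domain_def by auto
    let ?p = "\<pi> e"
    have p: "?p \<in> U \<alpha> \<inter> U \<beta>" using eab unfolding chart_domain_def by auto
    let ?v = "snd (\<Theta> \<alpha> e)"
    have vV: "\<And>B. B \<in> Idx n \<Longrightarrow> ?v B \<in> V (card B)" using inT[OF a ea] unfolding Tsp_def by auto
    have w: "snd (\<Theta> \<alpha> e') = (\<lambda>J\<in>Idx n. perm_eps ?g J *\<^sub>R ?v (?g ` J))"
      unfolding th by (simp add: local_perm_def)
    have Tb': "\<Theta> \<beta> e' = (?p, \<lambda>I\<in>Idx n. \<Sum>\<rho>\<in>canon_partitions I. \<omega> ?p \<rho> (map (snd (\<Theta> \<alpha> e')) \<rho>))"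
      using teq e'ab pe' by simp
    have Tb: "\<Theta> \<beta> e = (?p, \<lambda>I\<in>Idx n. \<Sum>\<rho>\<in>canon_partitions I. \<omega> ?p \<rho> (map ?v \<rho>))"
      using teq eab by simp
    have "(\<lambda>I\<in>Idx n. \<Sum>\<rho>\<in>canon_partitions I. \<omega> ?p \<rho> (map (snd (\<Theta> \<alpha> e')) \<rho>))
        = (\<lambda>I\<in>Idx n. perm_eps ?g I *\<^sub>R (\<lambda>I\<in>Idx n. \<Sum>\<rho>\<in>canon_partitions I. \<omega> ?p \<rho> (map ?v \<rho>)) (?g ` I))"
    proof (rule restrict_ext)
      fix I assume I: "I \<in> Idx n"
      have gI: "?g ` I \<in> Idx n" by (rule Idx_perm[OF g I])
      have mw: "\<And>\<rho>. \<rho> \<in> canon_partitions I \<Longrightarrow>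
          map (snd (\<Theta> \<alpha> e')) \<rho> = map (\<lambda>B. perm_eps ?g B *\<^sub>R ?v (?g ` B)) \<rho>"
        unfolding w using Idx_sub[OF I] by (intro map_cong) auto
      have "(\<Sum>\<rho>\<in>canon_partitions I. \<omega> ?p \<rho> (map (snd (\<Theta> \<alpha> e')) \<rho>))
          = (\<Sum>\<rho>\<in>canon_partitions I. \<omega> ?p \<rho> (map (\<lambda>B. perm_eps ?g B *\<^sub>R ?v (?g ` B)) \<rho>))"
        by (rule sum.cong) (simp_all add: mw)
      also have "\<dots> = perm_eps ?g I *\<^sub>R (\<Sum>\<rho>\<in>canon_partitions (?g ` I). \<omega> ?p \<rho> (map ?v \<rho>))"
      proof (rule sum_eq[where Om = "\<omega> ?p" and V = V and v = ?v and \<sigma> = \<sigma> and n = n and I = I])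
        show "\<sigma> permutes {1..n}" by (rule s)
        show "I \<in> Idx n" by (rule I)
        show "\<And>k. subspace (V k)" by (rule sub)
        show "\<And>B. B \<in> Idx n \<Longrightarrow> ?v B \<in> V (card B)" by (rule vV)
        show "\<forall>J\<in>Idx n. \<forall>\<rho>\<in>canon_partitions J. multilinear_into (map (\<lambda>B. V (card B)) \<rho>) (V (card J)) (\<omega> ?p \<rho>)"
          using mlc p by blast
        show "\<forall>J\<in>Idx n. \<forall>K\<in>Idx n. \<forall>\<rho>1\<in>canon_partitions J. \<forall>\<rho>2\<in>canon_partitions K.
            map card \<rho>1 = map card \<rho>2 \<longrightarrow> (\<forall>a. part_sgn \<rho>1 *\<^sub>R \<omega> ?p \<rho>1 a = part_sgn \<rho>2 *\<^sub>R \<omega> ?p \<rho>2 a)"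
          using c2 p by blast
        show "\<forall>J\<in>Idx n. \<forall>\<rho>\<in>canon_partitions J. sym_alt V (map card \<rho>) (\<lambda>a. part_sgn \<rho> *\<^sub>R \<omega> ?p \<rho> a)"
          using c3 p by blast
      qed
      finally show "(\<Sum>\<rho>\<in>canon_partitions I. \<omega> ?p \<rho> (map (snd (\<Theta> \<alpha> e')) \<rho>))
        = perm_eps ?g I *\<^sub>R (\<lambda>I\<in>Idx n. \<Sum>\<rho>\<in>canon_partitions I. \<omega> ?p \<rho> (map ?v \<rho>)) (?g ` I)"
        using gI by simp
    qed
    then have "\<Theta> \<beta> e' = local_perm n \<sigma> (\<Theta> \<beta> e)"
      unfolding Tb' Tb local_perm_def by simp
    then show "e' \<in> ?D \<beta> \<and> \<Theta> \<beta> e' = local_perm n \<sigma> (\<Theta> \<beta> e)" using e'b by simp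
  qed
  define ch where "ch e = (SOME \<alpha>. \<alpha> \<in> \<Lambda> \<and> \<pi> e \<in> U \<alpha>)" for e
  have ch: "\<And>e. e \<in> topspace E \<Longrightarrow> ch e \<in> \<Lambda> \<and> e \<in> ?D (ch e)"
  proof -
    fix e assume e: "e \<in> topspace E"
    have "\<pi> e \<in> topspace M" using continuous_map_image_subset_topspace[OF cont] e by blast
    then have "\<exists>\<alpha>. \<alpha> \<in> \<Lambda> \<and> \<pi> e \<in> U \<alpha>" using cover by blast
    then have "ch e \<in> \<Lambda> \<and> \<pi> e \<in> U (ch e)" unfolding ch_def by (rule someI_ex)
    then show "ch e \<in> \<Lambda> \<and> e \<in> ?D (ch e)" using e unfolding chart_domain_def by auto
  qed
  define \<Phi> where "\<Phi> \<sigma> e = (if e \<in> topspace E then inv_into (?D (ch e)) (\<Theta> (ch e)) (local_perm n \<sigma> (\<Theta> (ch e) e)) else e)"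
    for \<sigma> :: "nat \<Rightarrow> nat" and e
  have P0: "\<And>\<sigma> e. \<sigma> permutes {1..n} \<Longrightarrow> e \<in> topspace E \<Longrightarrow>
      \<Phi> \<sigma> e \<in> ?D (ch e) \<and> \<Theta> (ch e) (\<Phi> \<sigma> e) = local_perm n \<sigma> (\<Theta> (ch e) e)"
  proof -
    fix \<sigma> e assume s: "\<sigma> permutes {1..n}" and e: "e \<in> topspace E"
    have b: "ch e \<in> \<Lambda>" and eb: "e \<in> ?D (ch e)" using ch[OF e] by auto
    have "local_perm n \<sigma> (\<Theta> (ch e) e) \<in> \<Theta> (ch e) ` ?D (ch e)"
      using lp_in[OF s sub inT[OF b eb]] img[OF b] by simp
    then show "\<Phi> \<sigma> e \<in> ?D (ch e) \<and> \<Theta> (ch e) (\<Phi> \<sigma> e) = local_perm n \<sigma> (\<Theta> (ch e) e)"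
      unfolding \<Phi>_def using e by (simp add: inv_into_into f_inv_into_f)
  qed
  have P1: "\<And>\<sigma> \<alpha> e. \<sigma> permutes {1..n} \<Longrightarrow> \<alpha> \<in> \<Lambda> \<Longrightarrow> e \<in> ?D \<alpha> \<Longrightarrow>
      \<Phi> \<sigma> e \<in> ?D \<alpha> \<and> \<Theta> \<alpha> (\<Phi> \<sigma> e) = local_perm n \<sigma> (\<Theta> \<alpha> e)"
  proof -
    fix \<sigma> \<alpha> e assume s: "\<sigma> permutes {1..n}" and a: "\<alpha> \<in> \<Lambda>" and ea: "e \<in> ?D \<alpha>"
    have e: "e \<in> topspace E" using ea unfolding chart_domain_def by auto
    have b: "ch e \<in> \<Lambda>" and eb: "e \<in> ?D (ch e)" using ch[OF e] by auto
    show "\<Phi> \<sigma> e \<in> ?D \<alpha> \<and> \<Theta> \<alpha> (\<Phi> \<sigma> e) = local_perm n \<sigma> (\<Theta> \<alpha> e)"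
      using compat[OF b a s eb ea] P0[OF s e] by blast
  qed
  have C2: "\<forall>e\<in>topspace E. \<Phi> id e = e"
  proof
    fix e assume e: "e \<in> topspace E"
    have b: "ch e \<in> \<Lambda>" and eb: "e \<in> ?D (ch e)" using ch[OF e] by auto
    have "local_perm n id (\<Theta> (ch e) e) = \<Theta> (ch e) e" by (rule lp_id[OF inT[OF b eb]])
    then show "\<Phi> id e = e" unfolding \<Phi>_def using e eb inv_into_f_f[OF inj[OF b] eb] by simp
  qed
  have C3: "\<forall>\<sigma> \<tau>. \<sigma> permutes {1..n} \<longrightarrow> \<tau> permutes {1..n} \<longrightarrow>
      (\<forall>e\<in>topspace E. \<Phi> (\<sigma> \<circ> \<tau>) e = \<Phi> \<sigma> (\<Phi> \<tau> e))"
  proof (intro allI impI ballI)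
    fix \<sigma> \<tau> e assume s: "\<sigma> permutes {1..n}" and t: "\<tau> permutes {1..n}" and e: "e \<in> topspace E"
    have b: "ch e \<in> \<Lambda>" and eb: "e \<in> ?D (ch e)" using ch[OF e] by auto
    have st: "\<sigma> \<circ> \<tau> permutes {1..n}" by (rule permutes_compose[OF t s])
    have 1: "\<Phi> \<tau> e \<in> ?D (ch e)" "\<Theta> (ch e) (\<Phi> \<tau> e) = local_perm n \<tau> (\<Theta> (ch e) e)"
      using P1[OF t b eb] by auto
    have 2: "\<Phi> \<sigma> (\<Phi> \<tau> e) \<in> ?D (ch e)" "\<Theta> (ch e) (\<Phi> \<sigma> (\<Phi> \<tau> e)) = local_perm n \<sigma> (\<Theta> (ch e) (\<Phi> \<tau> e))"
      using P1[OF s b 1(1)] by auto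
    have 3: "\<Phi> (\<sigma> \<circ> \<tau>) e \<in> ?D (ch e)" "\<Theta> (ch e) (\<Phi> (\<sigma> \<circ> \<tau>) e) = local_perm n (\<sigma> \<circ> \<tau>) (\<Theta> (ch e) e)"
      using P1[OF st b eb] by auto
    have "\<Theta> (ch e) (\<Phi> (\<sigma> \<circ> \<tau>) e) = \<Theta> (ch e) (\<Phi> \<sigma> (\<Phi> \<tau> e))"
      unfolding 3(2) 2(2) 1(2) by (rule lp_comp[OF s t inT[OF b eb]])
    then show "\<Phi> (\<sigma> \<circ> \<tau>) e = \<Phi> \<sigma> (\<Phi> \<tau> e)" using inj[OF b] 2(1) 3(1) by (meson inj_onD)
  qed
  have C1: "\<forall>\<sigma>. \<sigma> permutes {1..n} \<longrightarrow>
      (\<forall>\<alpha>\<in>\<Lambda>. \<forall>e\<in>chart_domain E \<pi> (U \<alpha>).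
         \<Phi> \<sigma> e \<in> chart_domain E \<pi> (U \<alpha>) \<and> \<Theta> \<alpha> (\<Phi> \<sigma> e) = local_perm n \<sigma> (\<Theta> \<alpha> e))"
    using P1 by blast
  show ?thesis using C1 C2 C3 by blast
qed


end
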